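(* Let $\Delta=O(1)$. Suppose there is a deterministic $\mathsf{VOLUME}$ algorithm $\mathcal{A}$ that solves Sinkless Orientation on $n$-node trees of maximum degree $\Delta$ that are properly $\Delta$-edge colored, relative to $H(n,\Delta)$, with probe complexity $f(n)\le n/(3\Delta)$ for all sufficiently large $n$. Then there exist a constant $n^*$ and a deterministic $\mathsf{LOCAL}$ algorithm $\mathcal{A}'$ that solves Sinkless Orientation on all (possibly infinite) trees of maximum degree $\Delta$ that are properly $\Delta$-edge colored and properly $H(n^*,\Delta)$-labeled, in fewer than $n^*$ rounds.
   Context: Sinkless Orientation: orient every edge so that every vertex of sufficiently high constant degree has at least one outgoing edge (outputs at the two endpoints of an edge must be consistent). An ID graph $H(R,\Delta)$ is a collection of graphs $H_1,\dots,H_\Delta$ on a common vertex set $V(H)$ with $|V(H)|=\Delta^{10R}$, $1\le\deg_{H_i}(v)\le\Delta^{10}$ for all $v,i$, the union multigraph of the $H_i$ having girth at least $10R$, and every independent set of each $H_i$ having fewer than $|V(H)|/\Delta$ vertices; $H(R,\Delta)$ denotes the lexicographically smallest such ID graph (assumed to exist). For a tree $T$ with a proper edge coloring by $[\Delta]$, a proper $H$-labeling is a map $h:V(T)\to V(H)$ with $h(u)h(v)\in E(H_c)$ whenever $uv$ is an edge of color $c$. An algorithm works relative to $H(n,\Delta)$ if it is correct on every $n$-node input in which the unique identifiers are replaced by a proper $H(n,\Delta)$-labeling. Deterministic $\mathsf{VOLUME}$ model: the algorithm (knowing $n$) probes only neighbors of already discovered nodes starting from the queried node, each probe returning the node's label,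 degree and input; must always be correct; complexity is the maximum number of probes. Deterministic $\mathsf{LOCAL}$ model: in synchronous rounds, each node performs unbounded local computation and exchanges unbounded messages with its neighbors; an algorithm with $t$ rounds determines each node's output from its $t$-hop neighborhood (topology, labels, inputs). *)

theory Defs
  imports Complex_Main
begin

text \<open>An ID graph is given as H :: nat => nat => nat => bool, where H i u v means that
 uv is an edge of the graph H_i.
 We require H i to be empty outside i in {1..Delta} and outside the vertex set
 (canonical representation, so that the lexicographically smallest one is unique).\<close>

definition idg_size :: "nat \<Rightarrow> nat \<Rightarrow> nat" where
  "idg_size R \<Delta> = \<Delta> ^ (10 * R)"

definition is_ID_graph :: "nat \<Rightarrow> nat \<Rightarrow> (nat \<Rightarrow> nat \<Rightarrow> nat \<Rightarrow> bool) \<Rightarrow> bool" where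
  "is_ID_graph R \<Delta> H \<longleftrightarrow>
     (let N = idg_size R \<Delta> in
      \<comment> \<open>canonical support: simple graphs H_1..H_Delta on vertex set {0..<N}\<close>
      (\<forall>i u v. H i u v \<longrightarrow> i \<in> {1..\<Delta>} \<and> u < N \<and> v < N) \<and>
      (\<forall>i u v. H i u v \<longrightarrow> H i v u) \<and>
      (\<forall>i u. \<not> H i u u) \<and>
      \<comment> \<open>degree bounds\<close>
      (\<forall>i\<in>{1..\<Delta>}. \<forall>v<N. 1 \<le> card {u. H i v u} \<and> card {u. H i v u} \<le> \<Delta> ^ 10) \<and>
      \<comment> \<open>union multigraph has girth at least 10R: no cycle of length k < 10R
          (a cycle of length 2 consists of two distinct parallel edges)\<close>
      (\<forall>k xs cs. 2 \<le> k \<and> k < 10 * R \<and> length xs = k \<and> length cs = k \<and> distinct xs \<and>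
          (\<forall>j<k. H (cs ! j) (xs ! j) (xs ! ((j + 1) mod k))) \<longrightarrow>
          \<not> inj_on (\<lambda>j. (cs ! j, {xs ! j, xs ! ((j + 1) mod k)})) {..<k}) \<and>
      \<comment> \<open>every independent set of each H_i has fewer than N/Delta vertices\<close>
      (\<forall>i\<in>{1..\<Delta>}. \<forall>I. I \<subseteq> {0..<N} \<and> (\<forall>u\<in>I. \<forall>v\<in>I. \<not> H i u v) \<longrightarrow>
          real (card I) < real N / real \<Delta>))"

definition idg_encode :: "nat \<Rightarrow> nat \<Rightarrow> (nat \<Rightarrow> nat \<Rightarrow> nat \<Rightarrow> bool) \<Rightarrow> bool list" where
  "idg_encode R \<Delta> H =
     [H i u v. i \<leftarrow> [1..<\<Delta> + 1], u \<leftarrow> [0..<idg_size R \<Delta>], v \<leftarrow> [0..<idg_size R \<Delta>]]"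

definition Hid :: "nat \<Rightarrow> nat \<Rightarrow> (nat \<Rightarrow> nat \<Rightarrow> nat \<Rightarrow> bool)" where
  "Hid R \<Delta> = (THE H. is_ID_graph R \<Delta> H \<and>
       (\<forall>H'. is_ID_graph R \<Delta> H' \<longrightarrow> lexordp_eq (idg_encode R \<Delta> H) (idg_encode R \<Delta> H')))"

text \<open>A graph is given by a vertex set V and a symmetric edge relation E; col u w is the
 colour of edge uw. Ports are identified with edge colours.\<close>

definition walk_path :: "('v \<Rightarrow> 'v \<Rightarrow> bool) \<Rightarrow> 'v list \<Rightarrow> bool" where
  "walk_path E xs \<longleftrightarrow> (\<forall>j. Suc j < length xs \<longrightarrow> E (xs ! j) (xs ! Suc j))"

definition is_tree :: "'v set \<Rightarrow> ('v \<Rightarrow> 'v \<Rightarrow> bool) \<Rightarrow> bool" where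
  "is_tree V E \<longleftrightarrow>
     (\<forall>u w. E u w \<longrightarrow> u \<in> V \<and> w \<in> V) \<and>
     (\<forall>u w. E u w \<longrightarrow> E w u) \<and>
     (\<forall>u. \<not> E u u) \<and>
     (\<forall>u\<in>V. \<forall>w\<in>V. \<exists>xs. xs \<noteq> [] \<and> hd xs = u \<and> last xs = w \<and> walk_path E xs) \<and>
     (\<nexists>xs. 3 \<le> length xs \<and> distinct xs \<and> walk_path E xs \<and> E (last xs) (hd xs))"

definition max_deg_le :: "'v set \<Rightarrow> ('v \<Rightarrow> 'v \<Rightarrow> bool) \<Rightarrow> nat \<Rightarrow> bool" where
  "max_deg_le V E \<Delta> \<longleftrightarrow> (\<forall>u\<in>V. finite {w. E u w} \<and> card {w. E u w} \<le> \<Delta>)"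

definition proper_edge_col :: "('v \<Rightarrow> 'v \<Rightarrow> bool) \<Rightarrow> ('v \<Rightarrow> 'v \<Rightarrow> nat) \<Rightarrow> nat \<Rightarrow> bool" where
  "proper_edge_col E col \<Delta> \<longleftrightarrow>
     (\<forall>u w. E u w \<longrightarrow> col u w = col w u \<and> col u w \<in> {1..\<Delta>}) \<and>
     (\<forall>u w w'. E u w \<and> E u w' \<and> col u w = col u w' \<longrightarrow> w = w')"

definition proper_H_labeling ::
  "(nat \<Rightarrow> nat \<Rightarrow> nat \<Rightarrow> bool) \<Rightarrow> nat \<Rightarrow> nat \<Rightarrow> 'v set \<Rightarrow> ('v \<Rightarrow> 'v \<Rightarrow> bool) \<Rightarrow>
   ('v \<Rightarrow> 'v \<Rightarrow> nat) \<Rightarrow> ('v \<Rightarrow> nat) \<Rightarrow> bool" where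
  "proper_H_labeling H R \<Delta> V E col h \<longleftrightarrow>
     (\<forall>u\<in>V. h u < idg_size R \<Delta>) \<and> (\<forall>u w. E u w \<longrightarrow> H (col u w) (h u) (h w))"

definition colors :: "('v \<Rightarrow> 'v \<Rightarrow> bool) \<Rightarrow> ('v \<Rightarrow> 'v \<Rightarrow> nat) \<Rightarrow> 'v \<Rightarrow> nat set" where
  "colors E col u = {c. \<exists>w. E u w \<and> col u w = c}"

definition nbr :: "('v \<Rightarrow> 'v \<Rightarrow> bool) \<Rightarrow> ('v \<Rightarrow> 'v \<Rightarrow> nat) \<Rightarrow> 'v \<Rightarrow> nat \<Rightarrow> 'v option" where
  "nbr E col u c = (if \<exists>w. E u w \<and> col u w = c then Some (THE w. E u w \<and> col u w = c) else None)"

text \<open>What a node reveals: its label and its input (colours of incident edges, hence degree).\<close>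
definition obs :: "('v \<Rightarrow> 'v \<Rightarrow> bool) \<Rightarrow> ('v \<Rightarrow> 'v \<Rightarrow> nat) \<Rightarrow> ('v \<Rightarrow> nat) \<Rightarrow> 'v \<Rightarrow> nat \<times> nat set" where
  "obs E col h u = (h u, colors E col u)"

text \<open>Output of node u: the set S u of colours of its incident edges oriented outwards.
 d is the (constant) degree threshold above which a node may not be a sink.\<close>
definition sinkless_orientation ::
  "nat \<Rightarrow> 'v set \<Rightarrow> ('v \<Rightarrow> 'v \<Rightarrow> bool) \<Rightarrow> ('v \<Rightarrow> 'v \<Rightarrow> nat) \<Rightarrow> ('v \<Rightarrow> nat set) \<Rightarrow> bool" where
  "sinkless_orientation d V E col S \<longleftrightarrow>
     (\<forall>u\<in>V. S u \<subseteq> colors E col u) \<and>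
     (\<forall>u w. E u w \<longrightarrow> (col u w \<in> S u \<longleftrightarrow> col u w \<notin> S w)) \<and>
     (\<forall>u\<in>V. d \<le> card {w. E u w} \<longrightarrow> S u \<noteq> {})"

datatype vaction = VProbe nat nat  \<comment> \<open>index of discovered node, port (colour)\<close>
                 | VOutput "nat set"

type_synonym volume_alg = "nat \<Rightarrow> (nat \<times> nat set) list \<Rightarrow> vaction"

text \<open>Execution with a budget of k probes, starting from the list of discovered nodes us.
 None = exceeded budget or illegal probe.\<close>
fun vexec :: "volume_alg \<Rightarrow> nat \<Rightarrow> ('v \<Rightarrow> 'v \<Rightarrow> bool) \<Rightarrow> ('v \<Rightarrow> 'v \<Rightarrow> nat) \<Rightarrow> ('v \<Rightarrow> nat) \<Rightarrow>
               nat \<Rightarrow> 'v list \<Rightarrow> nat set option" where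
  "vexec A n E col h 0 us =
     (case A n (map (obs E col h) us) of VOutput S \<Rightarrow> Some S | VProbe i c \<Rightarrow> None)"
| "vexec A n E col h (Suc k) us =
     (case A n (map (obs E col h) us) of
        VOutput S \<Rightarrow> Some S
      | VProbe i c \<Rightarrow>
          (if i < length us then
             (case nbr E col (us ! i) c of
                Some w \<Rightarrow> vexec A n E col h k (us @ [w])
              | None \<Rightarrow> None)
           else None))"

text \<open>A solves sinkless orientation (threshold d) on n-node trees of max degree Delta,
 properly Delta-edge coloured, relative to H(n,Delta), with probe complexity f.
 (Finite trees are w.l.o.g. on vertices of type nat.)\<close>
definition volume_solves_SO :: "volume_alg \<Rightarrow> (nat \<Rightarrow> nat) \<Rightarrow> nat \<Rightarrow> nat \<Rightarrow> bool" where
  "volume_solves_SO A f d \<Delta> \<longleftrightarrow>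
     (\<forall>n (V :: nat set) E col h.
        finite V \<and> card V = n \<and> is_tree V E \<and> max_deg_le V E \<Delta> \<and> proper_edge_col E col \<Delta> \<and>
        proper_H_labeling (Hid n \<Delta>) n \<Delta> V E col h \<longrightarrow>
        (\<forall>v\<in>V. vexec A n E col h (f n) [v] \<noteq> None) \<and>
        sinkless_orientation d V E col (\<lambda>v. the (vexec A n E col h (f n) [v])))"

fun walk :: "('v \<Rightarrow> 'v \<Rightarrow> bool) \<Rightarrow> ('v \<Rightarrow> 'v \<Rightarrow> nat) \<Rightarrow> 'v \<Rightarrow> nat list \<Rightarrow> 'v option" where
  "walk E col v [] = Some v"
| "walk E col v (c # cs) = (case nbr E col v c of Some w \<Rightarrow> walk E col w cs | None \<Rightarrow> None)"

text \<open>The t-hop view of v: for every colour sequence of length at most t the label and input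
 of the node reached (this determines the t-hop neighbourhood with labels and inputs).\<close>
definition view :: "('v \<Rightarrow> 'v \<Rightarrow> bool) \<Rightarrow> ('v \<Rightarrow> 'v \<Rightarrow> nat) \<Rightarrow> ('v \<Rightarrow> nat) \<Rightarrow> nat \<Rightarrow> 'v \<Rightarrow>
                    (nat list \<Rightarrow> (nat \<times> nat set) option)" where
  "view E col h t v = (\<lambda>cs. if length cs \<le> t then map_option (obs E col h) (walk E col v cs) else None)"

type_synonym local_alg = "(nat list \<Rightarrow> (nat \<times> nat set) option) \<Rightarrow> nat set"

end

theory Submission
  imports Defs
begin

lemma nbr_Some_iff:
  assumes "proper_edge_col E col \<Delta>"
  shows "nbr E col u c = Some w \<longleftrightarrow> E u w \<and> col u w = c"
proof
  assume h: "nbr E col u c = Some w"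
  then have ex: "\<exists>w. E u w \<and> col u w = c" unfolding nbr_def by (auto split: if_splits)
  then obtain w0 where w0: "E u w0" "col u w0 = c" by blast
  have uniq: "\<And>w'. E u w' \<and> col u w' = c \<Longrightarrow> w' = w0" using assms w0 unfolding proper_edge_col_def by blast
  have "(THE w. E u w \<and> col u w = c) = w0" using w0 uniq by (intro the_equality) blast+
  with h ex w0 show "E u w \<and> col u w = c" unfolding nbr_def by auto
next
  assume h: "E u w \<and> col u w = c"
  have uniq: "\<And>w'. E u w' \<and> col u w' = c \<Longrightarrow> w' = w" using assms h unfolding proper_edge_col_def by blast
  have "(THE w'. E u w' \<and> col u w' = c) = w" using h uniq by (intro the_equality) blast+
  with h show "nbr E col u c = Some w" unfolding nbr_def by auto
qed

lemma nbr_None_iff: "nbr E col u c = None \<longleftrightarrow> c \<notin> colors E col u"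
  unfolding nbr_def colors_def by auto

lemma walk_path_Nil[simp]: "walk_path E []" and walk_path_single[simp]: "walk_path E [x]"
  unfolding walk_path_def by auto

lemma walk_path_Cons2[simp]: "walk_path E (x # y # xs) \<longleftrightarrow> E x y \<and> walk_path E (y # xs)"
  unfolding walk_path_def
  by (auto simp: nth_Cons split: nat.splits)

lemma walk_path_append:
  "walk_path E (xs @ y # ys) \<longleftrightarrow> walk_path E (xs @ [y]) \<and> walk_path E (y # ys)"
  by (induction xs rule: induct_list012) auto

lemma walk_path_snoc:
  "walk_path E (xs @ [y, z]) \<longleftrightarrow> walk_path E (xs @ [y]) \<and> E y z"
  using walk_path_append[of E xs y "[z]"] by simp

lemma walk_path_rev:
  assumes "\<And>a b. E a b \<Longrightarrow> E b a"
  shows "walk_path E xs \<Longrightarrow> walk_path E (rev xs)"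
proof (induction xs rule: induct_list012)
  case (3 x y zs)
  then have "walk_path E (rev zs @ [y])" "E y x" using assms by auto
  then show ?case using walk_path_snoc[of E "rev zs" y x] by simp
qed auto

lemma walk_path_join:
  assumes "walk_path E xs" "walk_path E ys" "xs \<noteq> []" "ys \<noteq> []" "last xs = hd ys"
  shows "walk_path E (xs @ tl ys)"
proof -
  obtain y ys' where ys: "ys = y # ys'" using assms by (cases ys) auto
  obtain xs' where xs: "xs = xs' @ [y]" using assms ys by (metis append_butlast_last_id list.sel(1))
  show ?thesis using assms walk_path_append[of E xs' y ys'] xs ys by simp
qed

lemma walk_path_mono: "walk_path E xs \<Longrightarrow> (\<And>a b. E a b \<Longrightarrow> E' a b) \<Longrightarrow> walk_path E' xs"
  unfolding walk_path_def by auto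

lemma walk_path_map:
  "walk_path E' (map f xs) \<longleftrightarrow> walk_path (\<lambda>a b. E' (f a) (f b)) xs"
  unfolding walk_path_def by auto

definition conn :: "('v \<Rightarrow> 'v \<Rightarrow> bool) \<Rightarrow> 'v set \<Rightarrow> 'v \<Rightarrow> 'v \<Rightarrow> bool" where
  "conn E S u y \<longleftrightarrow> (\<exists>xs. xs \<noteq> [] \<and> hd xs = u \<and> last xs = y \<and> walk_path E xs \<and> set xs \<subseteq> S)"

lemma conn_refl: "u \<in> S \<Longrightarrow> conn E S u u"
  unfolding conn_def by (rule exI[of _ "[u]"]) auto

lemma conn_step: "conn E S u x \<Longrightarrow> E x y \<Longrightarrow> y \<in> S \<Longrightarrow> conn E S u y"
  unfolding conn_def
proof (elim exE conjE)
  fix xs assume h: "xs \<noteq> []" "hd xs = u" "last xs = x" "walk_path E xs" "set xs \<subseteq> S" "E x y" "y \<in> S"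
  have "walk_path E (xs @ [y])"
    using walk_path_join[of E xs "[x,y]"] h by simp
  then show "\<exists>xs. xs \<noteq> [] \<and> hd xs = u \<and> last xs = y \<and> walk_path E xs \<and> set xs \<subseteq> S"
    using h by (intro exI[of _ "xs @ [y]"]) auto
qed

lemma conn_mono: "conn E S u y \<Longrightarrow> S \<subseteq> S' \<Longrightarrow> conn E S' u y"
  unfolding conn_def by blast

lemma conn_in: "conn E S u y \<Longrightarrow> u \<in> S \<and> y \<in> S"
  unfolding conn_def by (metis hd_in_set last_in_set subsetD)

lemma conn_between:
  assumes sym: "\<And>a b. E a b \<Longrightarrow> E b a" and "conn E S u x" "conn E S u y"
  shows "\<exists>zs. zs \<noteq> [] \<and> hd zs = x \<and> last zs = y \<and> walk_path E zs \<and> set zs \<subseteq> S"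
proof -
  obtain xs where xs: "xs \<noteq> []" "hd xs = u" "last xs = x" "walk_path E xs" "set xs \<subseteq> S"
    using assms(2) unfolding conn_def by blast
  obtain ys where ys: "ys \<noteq> []" "hd ys = u" "last ys = y" "walk_path E ys" "set ys \<subseteq> S"
    using assms(3) unfolding conn_def by blast
  have r: "walk_path E (rev xs)" by (rule walk_path_rev[where E=E, OF sym xs(4)])
  have w: "walk_path E (rev xs @ tl ys)"
    using walk_path_join[OF r ys(4)] xs ys by (simp add: last_rev)
  have l: "last (rev xs @ tl ys) = y"
    using xs ys by (cases ys) (auto simp: hd_rev last_rev)
  have "set (tl ys) \<subseteq> S" using ys by (cases ys) auto
  then show ?thesis using w l xs by (intro exI[of _ "rev xs @ tl ys"]) (auto simp: hd_rev)
qed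

fun vtrace :: "volume_alg \<Rightarrow> nat \<Rightarrow> ('v \<Rightarrow> 'v \<Rightarrow> bool) \<Rightarrow> ('v \<Rightarrow> 'v \<Rightarrow> nat) \<Rightarrow> ('v \<Rightarrow> nat) \<Rightarrow>
               nat \<Rightarrow> 'v list \<Rightarrow> 'v list" where
  "vtrace A n E col h 0 us = us"
| "vtrace A n E col h (Suc k) us =
     (case A n (map (obs E col h) us) of
        VOutput S \<Rightarrow> us
      | VProbe i c \<Rightarrow>
          (if i < length us then
             (case nbr E col (us ! i) c of
                Some w \<Rightarrow> vtrace A n E col h k (us @ [w])
              | None \<Rightarrow> us)
           else us))"

lemma vtrace_mono: "set us \<subseteq> set (vtrace A n E col h k us)"
proof (induction k arbitrary: us)
  case 0 then show ?case by simp
next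
  case (Suc k)
  show ?case
  proof (cases "A n (map (obs E col h) us)")
    case (VProbe i c)
    then show ?thesis using Suc.IH by (fastforce split: option.splits)
  qed simp
qed

lemma vtrace_length: "length (vtrace A n E col h k us) \<le> length us + k"
proof (induction k arbitrary: us)
  case 0 then show ?case by simp
next
  case (Suc k)
  show ?case
  proof (cases "A n (map (obs E col h) us)")
    case (VProbe i c)
    have "\<And>w. length (vtrace A n E col h k (us @ [w])) \<le> length us + Suc k"
      by (rule le_trans[OF Suc.IH]) simp
    then show ?thesis using VProbe by (auto split: option.splits)
  qed simp
qed

lemma vtrace_closed:
  assumes pc: "proper_edge_col E col \<Delta>"
  shows "(\<forall>x\<in>set us. P x) \<Longrightarrow>
    (\<And>x w. P x \<Longrightarrow> E x w \<Longrightarrow> w \<in> set (vtrace A n E col h k us) \<Longrightarrow> P w) \<Longrightarrow>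
    \<forall>y\<in>set (vtrace A n E col h k us). P y"
proof (induction k arbitrary: us)
  case 0 then show ?case by simp
next
  case (Suc k)
  show ?case
  proof (cases "A n (map (obs E col h) us)")
    case (VProbe i c)
    show ?thesis
    proof (cases "i < length us")
      case True
      show ?thesis
      proof (cases "nbr E col (us ! i) c")
        case (Some w)
        have tr: "vtrace A n E col h (Suc k) us = vtrace A n E col h k (us @ [w])"
          using VProbe True Some by simp
        have E: "E (us ! i) w" using Some nbr_Some_iff[OF pc] by blast
        have "w \<in> set (vtrace A n E col h k (us @ [w]))" using vtrace_mono by fastforce
        then have "P w" using Suc.prems E True tr by (metis nth_mem)
        then have "\<forall>x\<in>set (us @ [w]). P x" using Suc.prems by auto
        from Suc.IH[OF this] Suc.prems(2) tr show ?thesis by metis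
      qed (use VProbe True Suc.prems in simp)
    qed (use VProbe Suc.prems in simp)
  qed (use Suc.prems in simp)
qed

lemma vexec_transfer:
  "(\<forall>x\<in>set (vtrace A n E col h k us). obs E' col' h' (\<sigma> x) = obs E col h x \<and>
        (\<forall>c. nbr E' col' (\<sigma> x) c = map_option \<sigma> (nbr E col x c))) \<Longrightarrow>
   vexec A n E' col' h' k (map \<sigma> us) = vexec A n E col h k us"
proof (induction k arbitrary: us)
  case 0
  then have "map (obs E' col' h') (map \<sigma> us) = map (obs E col h) us" by simp
  then show ?case by (simp only: vexec.simps)
next
  case (Suc k)
  have sub: "set us \<subseteq> set (vtrace A n E col h (Suc k) us)" by (rule vtrace_mono)
  have m: "map (obs E' col' h') (map \<sigma> us) = map (obs E col h) us" using Suc.prems sub by auto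
  show ?case
  proof (cases "A n (map (obs E col h) us)")
    case (VProbe i c)
    show ?thesis
    proof (cases "i < length us")
      case True
      have nb: "nbr E' col' (map \<sigma> us ! i) c = map_option \<sigma> (nbr E col (us ! i) c)"
      proof -
        have "us ! i \<in> set (vtrace A n E col h (Suc k) us)" using sub nth_mem[OF True] by blast
        then show ?thesis using Suc.prems True by (simp del: vtrace.simps)
      qed
      show ?thesis
      proof (cases "nbr E col (us ! i) c")
        case (Some w)
        have tr: "vtrace A n E col h (Suc k) us = vtrace A n E col h k (us @ [w])"
          using VProbe True Some by simp
        have "vexec A n E' col' h' k (map \<sigma> (us @ [w])) = vexec A n E col h k (us @ [w])"
          using Suc.IH Suc.prems tr by metis
        then show ?thesis using VProbe True Some nb by (simp add: m del: map_map)
      qed (use VProbe True nb in \<open>simp add: m del: map_map\<close>)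
    qed (use VProbe in \<open>simp add: m del: map_map\<close>)
  qed (simp add: m del: map_map)
qed

definition leafy :: "('v \<Rightarrow> 'v \<Rightarrow> bool) \<Rightarrow> ('v \<Rightarrow> 'v \<Rightarrow> nat) \<Rightarrow> 'v \<Rightarrow> bool" where
  "leafy E col x \<longleftrightarrow> card (colors E col x) \<le> 1"

definition ca :: "nat set \<Rightarrow> nat" where "ca cs = (if 1 \<notin> cs then 1 else 2)"
definition cb :: "nat set \<Rightarrow> nat" where "cb cs = (if ca cs = 1 then 2 else 1)"
definition incol :: "nat set \<Rightarrow> nat \<Rightarrow> nat" where "incol cs k = (if even k then ca cs else cb cs)"
definition outcol :: "nat set \<Rightarrow> nat \<Rightarrow> nat" where "outcol cs k = (if even k then cb cs else ca cs)"
definition pick :: "(nat \<Rightarrow> nat \<Rightarrow> nat \<Rightarrow> bool) \<Rightarrow> nat \<Rightarrow> nat \<Rightarrow> nat" where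
  "pick H c x = (SOME y. H c x y)"

fun rlab :: "(nat \<Rightarrow> nat \<Rightarrow> nat \<Rightarrow> bool) \<Rightarrow> nat \<times> nat set \<Rightarrow> nat \<Rightarrow> nat" where
  "rlab H ob 0 = pick H (ca (snd ob)) (fst ob)"
| "rlab H ob (Suc k) = pick H (outcol (snd ob) k) (rlab H ob k)"

lemma ca_cb: "ca cs \<noteq> cb cs" "ca cs \<in> {1,2}" "cb cs \<in> {1,2}"
  unfolding ca_def cb_def by auto

lemma incol_outcol: "incol cs k \<noteq> outcol cs k" "incol cs (Suc k) = outcol cs k" "incol cs 0 = ca cs"
  unfolding incol_def outcol_def using ca_cb(1)[of cs] by auto

lemma ca_notin: "finite cs \<Longrightarrow> card cs \<le> 1 \<Longrightarrow> ca cs \<notin> cs"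
proof -
  assume f: "finite cs" and c: "card cs \<le> 1"
  show ?thesis
  proof (cases "1 \<in> cs")
    case True
    have "\<forall>a\<in>cs. \<forall>b\<in>cs. a = b" using f c card_le_Suc0_iff_eq[OF f] by simp
    then have "2 \<notin> cs" using True by fastforce
    then show ?thesis unfolding ca_def using True by simp
  qed (simp add: ca_def)
qed

fun xE :: "'v set \<Rightarrow> ('v \<Rightarrow> 'v \<Rightarrow> bool) \<Rightarrow> ('v \<Rightarrow> 'v \<Rightarrow> nat) \<Rightarrow> ('v + 'v \<times> nat) \<Rightarrow> ('v + 'v \<times> nat) \<Rightarrow> bool" where
  "xE V E col (Inl x) (Inl y) = E x y"
| "xE V E col (Inl x) (Inr (l, k)) = (x = l \<and> k = 0 \<and> l \<in> V \<and> leafy E col l)"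
| "xE V E col (Inr (l, k)) (Inl x) = (x = l \<and> k = 0 \<and> l \<in> V \<and> leafy E col l)"
| "xE V E col (Inr (l, k)) (Inr (l', k')) = (l = l' \<and> l \<in> V \<and> leafy E col l \<and> (k' = Suc k \<or> k = Suc k'))"

fun xcol :: "('v \<Rightarrow> 'v \<Rightarrow> bool) \<Rightarrow> ('v \<Rightarrow> 'v \<Rightarrow> nat) \<Rightarrow> ('v + 'v \<times> nat) \<Rightarrow> ('v + 'v \<times> nat) \<Rightarrow> nat" where
  "xcol E col (Inl x) (Inl y) = col x y"
| "xcol E col (Inl x) (Inr (l, k)) = ca (colors E col l)"
| "xcol E col (Inr (l, k)) (Inl x) = ca (colors E col l)"
| "xcol E col (Inr (l, k)) (Inr (l', k')) = outcol (colors E col l) (min k k')"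

fun xh :: "(nat \<Rightarrow> nat \<Rightarrow> nat \<Rightarrow> bool) \<Rightarrow> ('v \<Rightarrow> 'v \<Rightarrow> bool) \<Rightarrow> ('v \<Rightarrow> 'v \<Rightarrow> nat) \<Rightarrow> ('v \<Rightarrow> nat) \<Rightarrow>
    ('v + 'v \<times> nat) \<Rightarrow> nat" where
  "xh H E col h (Inl x) = h x"
| "xh H E col h (Inr (l, k)) = rlab H (obs E col h l) k"

definition xV :: "'v set \<Rightarrow> ('v \<Rightarrow> 'v \<Rightarrow> bool) \<Rightarrow> ('v \<Rightarrow> 'v \<Rightarrow> nat) \<Rightarrow> ('v + 'v \<times> nat) set" where
  "xV V E col = Inl ` V \<union> {Inr (l, k) | l k. l \<in> V \<and> leafy E col l}"

lemma xE_Inl_iff: "xE V E col (Inl x) w \<longleftrightarrow>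
   (\<exists>y. w = Inl y \<and> E x y) \<or> (w = Inr (x, 0) \<and> x \<in> V \<and> leafy E col x)"
  by (cases w) auto

lemma xE_Inr_iff: "xE V E col (Inr (l, k)) w \<longleftrightarrow> l \<in> V \<and> leafy E col l \<and>
   (w = Inr (l, Suc k) \<or> (k = 0 \<and> w = Inl l) \<or> (\<exists>k'. k = Suc k' \<and> w = Inr (l, k')))"
  by (cases w) auto

lemma xE_sym: "xE V E col a b \<Longrightarrow> (\<And>x y. E x y \<Longrightarrow> E y x) \<Longrightarrow> xE V E col b a"
  by (cases a; cases b) auto

lemma xcol_sym: "(\<And>x y. E x y \<Longrightarrow> col x y = col y x) \<Longrightarrow> xE V E col a b \<Longrightarrow> xcol E col a b = xcol E col b a"
  by (cases a; cases b) (auto simp: min.commute)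

lemma colors_finite:
  assumes "max_deg_le V E \<Delta>" "x \<in> V"
  shows "finite (colors E col x)"
proof -
  have "colors E col x = col x ` {w. E x w}" unfolding colors_def by auto
  then show ?thesis using assms unfolding max_deg_le_def by auto
qed

lemma card_colors:
  assumes "max_deg_le V E \<Delta>" "x \<in> V" "proper_edge_col E col \<Delta>"
  shows "card (colors E col x) = card {w. E x w}"
proof -
  have "colors E col x = col x ` {w. E x w}" unfolding colors_def by auto
  moreover have "inj_on (col x) {w. E x w}" using assms(3) unfolding proper_edge_col_def inj_on_def by blast
  ultimately show ?thesis by (simp add: card_image)
qed

lemma ID_parts:
  assumes "is_ID_graph R \<Delta> H"
  shows "\<forall>i u v. H i u v \<longrightarrow> i \<in> {1..\<Delta>} \<and> u < idg_size R \<Delta> \<and> v < idg_size R \<Delta>"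
    and "\<forall>i u v. H i u v \<longrightarrow> H i v u"
    and "\<forall>i u. \<not> H i u u"
    and "\<forall>i\<in>{1..\<Delta>}. \<forall>v<idg_size R \<Delta>. 1 \<le> card {u. H i v u} \<and> card {u. H i v u} \<le> \<Delta> ^ 10"
proof -
  note a = assms[unfolded is_ID_graph_def Let_def]
  show "\<forall>i u v. H i u v \<longrightarrow> i \<in> {1..\<Delta>} \<and> u < idg_size R \<Delta> \<and> v < idg_size R \<Delta>" using a by (rule conjunct1)
  show "\<forall>i u v. H i u v \<longrightarrow> H i v u" using a[THEN conjunct2] by (rule conjunct1)
  show "\<forall>i u. \<not> H i u u" using a[THEN conjunct2, THEN conjunct2] by (rule conjunct1)
  show "\<forall>i\<in>{1..\<Delta>}. \<forall>v<idg_size R \<Delta>. 1 \<le> card {u. H i v u} \<and> card {u. H i v u} \<le> \<Delta> ^ 10"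
    using a[THEN conjunct2, THEN conjunct2, THEN conjunct2] by (rule conjunct1)
qed

lemma ID_support: "is_ID_graph R \<Delta> H \<Longrightarrow> H i u v \<Longrightarrow> i \<in> {1..\<Delta>} \<and> u < idg_size R \<Delta> \<and> v < idg_size R \<Delta>"
  using ID_parts(1) by blast

lemma ID_sym: "is_ID_graph R \<Delta> H \<Longrightarrow> H i u v \<Longrightarrow> H i v u"
  using ID_parts(2) by blast

lemma ID_irrefl: "is_ID_graph R \<Delta> H \<Longrightarrow> \<not> H i u u"
  using ID_parts(3) by blast

lemma pick_ok:
  assumes "is_ID_graph R \<Delta> H" "c \<in> {1..\<Delta>}" "x < idg_size R \<Delta>"
  shows "H c x (pick H c x) \<and> pick H c x < idg_size R \<Delta>"
proof -
  have "1 \<le> card {u. H c x u}" using ID_parts(4)[OF assms(1)] assms(2,3) by blast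
  then have "\<exists>y. H c x y" by (metis Collect_empty_eq card.empty not_one_le_zero)
  then have "H c x (pick H c x)" unfolding pick_def by (rule someI_ex)
  moreover then have "pick H c x < idg_size R \<Delta>" using ID_support[OF assms(1)] by blast
  ultimately show ?thesis by blast
qed

lemma rlab_ok:
  assumes "is_ID_graph R \<Delta> H" "2 \<le> \<Delta>" "fst ob < idg_size R \<Delta>"
  shows "rlab H ob k < idg_size R \<Delta>"
proof (induction k)
  case 0
  have "ca (snd ob) \<in> {1..\<Delta>}" using ca_cb(2)[of "snd ob"] assms(2) by auto
  then show ?case using pick_ok[OF assms(1) _ assms(3)] by simp
next
  case (Suc k)
  have "outcol (snd ob) k \<in> {1..\<Delta>}" using ca_cb(2,3)[of "snd ob"] assms(2) unfolding outcol_def by auto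
  then show ?case using pick_ok[OF assms(1) _ Suc] by simp
qed

locale xt =
  fixes V :: "'v set" and E :: "'v \<Rightarrow> 'v \<Rightarrow> bool" and col :: "'v \<Rightarrow> 'v \<Rightarrow> nat" and h :: "'v \<Rightarrow> nat"
    and H :: "nat \<Rightarrow> nat \<Rightarrow> nat \<Rightarrow> bool" and R :: nat and \<Delta> :: nat
  assumes tree: "is_tree V E" and deg: "max_deg_le V E \<Delta>" and pc: "proper_edge_col E col \<Delta>"
    and lab: "proper_H_labeling H R \<Delta> V E col h" and ID: "is_ID_graph R \<Delta> H" and D2: "2 \<le> \<Delta>"
begin

abbreviation "XV \<equiv> xV V E col"
abbreviation "XE \<equiv> xE V E col"
abbreviation "XC \<equiv> xcol E col"
abbreviation "XH \<equiv> xh H E col h"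
abbreviation "cs x \<equiv> colors E col x"

lemma E_in: "E x y \<Longrightarrow> x \<in> V \<and> y \<in> V" using tree unfolding is_tree_def by blast
lemma E_sym: "E x y \<Longrightarrow> E y x" using tree unfolding is_tree_def by blast
lemma E_irrefl: "\<not> E x x" using tree unfolding is_tree_def by blast
lemma col_sym: "E x y \<Longrightarrow> col x y = col y x" using pc unfolding proper_edge_col_def by blast
lemma col_range: "E x y \<Longrightarrow> col x y \<in> {1..\<Delta>}" using pc unfolding proper_edge_col_def by blast
lemma col_inj: "E x y \<Longrightarrow> E x y' \<Longrightarrow> col x y = col x y' \<Longrightarrow> y = y'" using pc unfolding proper_edge_col_def by blast

lemma ca_range: "ca c \<in> {1..\<Delta>}" "cb c \<in> {1..\<Delta>}" using ca_cb(2,3)[of c] D2 by auto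
lemma inout_range: "incol c k \<in> {1..\<Delta>}" "outcol c k \<in> {1..\<Delta>}"
  unfolding incol_def outcol_def using ca_range by auto
lemma ranges: "Suc 0 \<le> ca c" "ca c \<le> \<Delta>" "Suc 0 \<le> cb c" "cb c \<le> \<Delta>" "Suc 0 \<le> outcol c k" "outcol c k \<le> \<Delta>"
  "Suc 0 \<le> incol c k" "incol c k \<le> \<Delta>"
  using ca_range inout_range by auto
lemma col_range': "E x y \<Longrightarrow> Suc 0 \<le> col x y" "E x y \<Longrightarrow> col x y \<le> \<Delta>" using col_range by auto

lemma mem_colors: "c \<in> colors E' col' x \<longleftrightarrow> (\<exists>w. E' x w \<and> col' x w = c)"
  unfolding colors_def by simp

lemma leafy_ca: "x \<in> V \<Longrightarrow> leafy E col x \<Longrightarrow> ca (cs x) \<notin> cs x"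
  using ca_notin colors_finite[OF deg] unfolding leafy_def by blast

lemma in_colors: "E x y \<Longrightarrow> col x y \<in> cs x" unfolding colors_def by blast

lemma xE_in: "XE a b \<Longrightarrow> a \<in> XV \<and> b \<in> XV"
  by (cases a; cases b) (auto simp: xV_def dest: E_in)

lemma xE_sym': "XE a b \<Longrightarrow> XE b a"
  using xE_sym E_sym by metis

lemma xE_irrefl: "\<not> XE a a"
  by (cases a) (auto simp: E_irrefl)

lemma xcol_sym': "XE a b \<Longrightarrow> XC a b = XC b a"
  using xcol_sym col_sym by metis

lemma xcol_range: "XE a b \<Longrightarrow> XC a b \<in> {1..\<Delta>}"
  by (cases a; cases b) (auto simp: col_range' ranges)

lemma xcol_Inr_up: "XC (Inr (l, k)) (Inr (l, Suc k)) = outcol (cs l) k" by simp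
lemma xcol_Inr_down: "XC (Inr (l, Suc k)) (Inr (l, k)) = incol (cs l) (Suc k)"
  by (simp add: incol_outcol)

lemma xcol_inj: "XE u w \<Longrightarrow> XE u w' \<Longrightarrow> XC u w = XC u w' \<Longrightarrow> w = w'"
proof (cases u)
  case (Inl x)
  assume a: "XE u w" "XE u w'" "XC u w = XC u w'"
  show ?thesis
  proof (cases w; cases w')
    fix y y' assume "w = Inl y" "w' = Inl y'" then show ?thesis using a Inl col_inj by auto
  next
    fix y p assume w: "w = Inl y" "w' = Inr p"
    obtain l' k' where p: "p = (l', k')" by (cases p)
    have "E x y" "w' = Inr (x, 0)" "x \<in> V" "leafy E col x" using a Inl w p by auto
    moreover have "col x y = ca (cs x)" using a(3) Inl w(1) \<open>w' = Inr (x, 0)\<close> by simp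
    ultimately show ?thesis using in_colors leafy_ca by metis
  next
    fix y p assume w: "w' = Inl y" "w = Inr p"
    obtain l' k' where p: "p = (l', k')" by (cases p)
    have "E x y" "w = Inr (x, 0)" "x \<in> V" "leafy E col x" using a Inl w p by auto
    moreover have "col x y = ca (cs x)" using a(3) Inl w(1) \<open>w = Inr (x, 0)\<close> by simp
    ultimately show ?thesis using in_colors leafy_ca by metis
  next
    fix p p' assume "w = Inr p" "w' = Inr p'" then show ?thesis using a Inl by (cases p; cases p') auto
  qed
next
  case (Inr p)
  then obtain l k where p: "u = Inr (l, k)" by (cases p) auto
  assume a: "XE u w" "XE u w'" "XC u w = XC u w'"
  have ne: "incol (cs l) k \<noteq> outcol (cs l) k" by (rule incol_outcol(1))
  have cw: "\<And>z. XE u z \<Longrightarrow> (z = Inr (l, Suc k) \<and> XC u z = outcol (cs l) k) \<or>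
       (z \<noteq> Inr (l, Suc k) \<and> XC u z = incol (cs l) k \<and> (k = 0 \<and> z = Inl l \<or> (\<exists>k'. k = Suc k' \<and> z = Inr (l, k'))))"
  proof -
    fix z assume z: "XE u z"
    then have "z = Inr (l, Suc k) \<or> (k = 0 \<and> z = Inl l) \<or> (\<exists>k'. k = Suc k' \<and> z = Inr (l, k'))"
      unfolding p xE_Inr_iff by blast
    then show "(z = Inr (l, Suc k) \<and> XC u z = outcol (cs l) k) \<or>
       (z \<noteq> Inr (l, Suc k) \<and> XC u z = incol (cs l) k \<and> (k = 0 \<and> z = Inl l \<or> (\<exists>k'. k = Suc k' \<and> z = Inr (l, k'))))"
    proof (elim disjE exE conjE)
      assume "z = Inr (l, Suc k)" then show ?thesis using p by simp
    next
      assume "k = 0" "z = Inl l" then show ?thesis using p incol_outcol(3) by simp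
    next
      fix k' assume "k = Suc k'" "z = Inr (l, k')" then show ?thesis using p incol_outcol(2) by simp
    qed
  qed
  show ?thesis using cw[OF a(1)] cw[OF a(2)] a(3) ne by auto
qed

lemma xpc: "proper_edge_col XE XC \<Delta>"
  unfolding proper_edge_col_def using xcol_sym' xcol_range xcol_inj by blast

lemma colors_xInl: "colors XE XC (Inl x) = cs x \<union> (if x \<in> V \<and> leafy E col x then {ca (cs x)} else {})"
  by (rule set_eqI) (auto simp: mem_colors xE_Inl_iff)

lemma colors_xInr: "l \<in> V \<Longrightarrow> leafy E col l \<Longrightarrow> colors XE XC (Inr (l, k)) = {ca (cs l), cb (cs l)}"
proof -
  assume l: "l \<in> V" "leafy E col l"
  have up: "outcol (cs l) k \<in> colors XE XC (Inr (l, k))"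
    unfolding mem_colors using l by (intro exI[of _ "Inr (l, Suc k)"]) simp
  have dn: "incol (cs l) k \<in> colors XE XC (Inr (l, k))"
  proof (cases k)
    case 0 then show ?thesis unfolding mem_colors using l incol_outcol(3)
      by (intro exI[of _ "Inl l"]) simp
  next
    case (Suc k') then show ?thesis unfolding mem_colors using l incol_outcol(2)
      by (intro exI[of _ "Inr (l, k')"]) simp
  qed
  have sub: "colors XE XC (Inr (l, k)) \<subseteq> {incol (cs l) k, outcol (cs l) k}"
    unfolding mem_colors subset_iff using incol_outcol by (auto simp: xE_Inr_iff)
  have "{incol (cs l) k, outcol (cs l) k} = {ca (cs l), cb (cs l)}"
    unfolding incol_def outcol_def by auto
  moreover have "colors XE XC (Inr (l, k)) = {incol (cs l) k, outcol (cs l) k}"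
    using up dn sub by auto
  ultimately show ?thesis by simp
qed

end

lemma walk_path_set:
  assumes "walk_path E xs" "\<And>a b. E a b \<Longrightarrow> a \<in> V \<and> b \<in> V" "xs \<noteq> []" "hd xs \<in> V"
  shows "set xs \<subseteq> V"
  using assms by (induction xs rule: induct_list012) auto

lemma cycle_two_nbrs:
  assumes sym: "\<And>a b. E a b \<Longrightarrow> E b a" and d: "distinct xs" and l3: "3 \<le> length xs"
    and w: "walk_path E xs" and cl: "E (last xs) (hd xs)" and j: "j < length xs"
  shows "\<exists>p s. p \<in> set xs \<and> s \<in> set xs \<and> p \<noteq> s \<and> E (xs ! j) p \<and> E (xs ! j) s"
proof -
  define L where "L = length xs"
  define si where "si = (if j + 1 < L then j + 1 else 0)"
  define pi where "pi = (if 0 < j then j - 1 else L - 1)"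
  have ne: "xs \<noteq> []" using l3 by auto
  have lastn: "last xs = xs ! (L - 1)" unfolding L_def using ne by (simp add: last_conv_nth)
  have hdn: "hd xs = xs ! 0" using ne by (simp add: hd_conv_nth)
  have wp: "\<And>i. Suc i < L \<Longrightarrow> E (xs ! i) (xs ! Suc i)" using w unfolding walk_path_def L_def by blast
  have s1: "E (xs ! j) (xs ! si)"
  proof (cases "j + 1 < L")
    case True then show ?thesis unfolding si_def using wp by simp
  next
    case False then have "j = L - 1" using j unfolding L_def by simp
    then show ?thesis unfolding si_def using False cl lastn hdn by simp
  qed
  have p1: "E (xs ! j) (xs ! pi)"
  proof (cases "0 < j")
    case True then have "E (xs ! (j - 1)) (xs ! j)" using wp[of "j - 1"] j unfolding L_def by simp
    then show ?thesis unfolding pi_def using True sym by simp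
  next
    case False then show ?thesis unfolding pi_def using cl lastn hdn sym by simp
  qed
  have ineq: "si \<noteq> pi" unfolding si_def pi_def using l3 j unfolding L_def by auto
  have lt: "si < L" "pi < L" unfolding si_def pi_def L_def using j l3 by auto
  have "xs ! si \<noteq> xs ! pi" using d ineq lt unfolding L_def by (simp add: nth_eq_iff_index_eq)
  then show ?thesis using s1 p1 lt unfolding L_def by (metis nth_mem)
qed

lemma fst_obs[simp]: "fst (obs E col h x) = h x" and snd_obs[simp]: "snd (obs E col h x) = colors E col x"
  unfolding obs_def by auto

context xt
begin

lemma inout_eq: "{incol (cs l) k, outcol (cs l) k} = {ca (cs l), cb (cs l)}"
  unfolding incol_def outcol_def by auto

lemma xE_Inl_set: "{w. XE (Inl x) w} = Inl ` {y. E x y} \<union> (if x \<in> V \<and> leafy E col x then {Inr (x, 0)} else {})"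
  by (auto simp: xE_Inl_iff)

lemma xE_Inr_set: "{w. XE (Inr (l, k)) w} \<subseteq> {Inr (l, Suc k), if k = 0 then Inl l else Inr (l, k - 1)}"
  by (auto simp: xE_Inr_iff)

lemma xdeg: "max_deg_le XV XE \<Delta>"
  unfolding max_deg_le_def
proof
  fix a assume a: "a \<in> XV"
  show "finite {w. XE a w} \<and> card {w. XE a w} \<le> \<Delta>"
  proof (cases a)
    case (Inl x)
    then have x: "x \<in> V" using a unfolding xV_def by auto
    have f: "finite {y. E x y}" "card {y. E x y} \<le> \<Delta>" using deg x unfolding max_deg_le_def by auto
    have fi: "finite (Inl ` {y. E x y} :: ('v + 'v \<times> nat) set)" using f by simp
    have ci: "card (Inl ` {y. E x y} :: ('v + 'v \<times> nat) set) = card {y. E x y}" by (simp add: card_image)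
    show ?thesis
    proof (cases "leafy E col x")
      case True
      have "card {y. E x y} \<le> 1" using True card_colors[OF deg x pc] unfolding leafy_def by simp
      moreover have "card (Inl ` {y. E x y} \<union> {Inr (x, 0::nat)}) \<le> card (Inl ` {y. E x y} :: ('v + 'v \<times> nat) set) + 1"
        using f(1) by (simp add: card_insert_if)
      ultimately show ?thesis using Inl xE_Inl_set[of x] True x fi ci D2 by auto
    next
      case False
      then show ?thesis using Inl xE_Inl_set[of x] fi ci f by auto
    qed
  next
    case (Inr p)
    then obtain l k where p: "a = Inr (l, k)" by (cases p) auto
    have "card {Inr (l, Suc k), if k = 0 then Inl l else Inr (l, k - 1)} \<le> 2"
      by (simp add: card_insert_if)
    then have "card {w. XE a w} \<le> 2" using p xE_Inr_set[of l k]
      by (meson card_mono finite.emptyI finite.insertI le_trans)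
    moreover have "finite {w. XE a w}" using p xE_Inr_set[of l k] by (meson finite.emptyI finite.insertI finite_subset)
    ultimately show ?thesis using D2 by auto
  qed
qed

lemma xconn:
  assumes u0: "u0 \<in> V" and z: "z \<in> XV"
  shows "conn XE XV (Inl u0) z"
proof (cases z)
  case (Inl y)
  then have y: "y \<in> V" using z unfolding xV_def by auto
  obtain xs where xs: "xs \<noteq> []" "hd xs = u0" "last xs = y" "walk_path E xs"
    using tree u0 y unfolding is_tree_def by blast
  have sv: "set xs \<subseteq> V" using walk_path_set[OF xs(4) E_in xs(1)] xs(2) u0 by blast
  have "walk_path XE (map Inl xs)" unfolding walk_path_map using xs(4) by simp
  moreover have "set (map Inl xs) \<subseteq> XV" using sv unfolding xV_def by auto
  ultimately show ?thesis unfolding conn_def using xs Inl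
    by (intro exI[of _ "map Inl xs"]) (simp add: hd_map last_map)
next
  case (Inr p)
  then obtain l k where p: "z = Inr (l, k)" by (cases p) auto
  then have l: "l \<in> V" "leafy E col l" using z unfolding xV_def by auto
  have cl: "conn XE XV (Inl u0) (Inl l)"
  proof -
    obtain xs where xs: "xs \<noteq> []" "hd xs = u0" "last xs = l" "walk_path E xs"
      using tree u0 l unfolding is_tree_def by blast
    have sv: "set xs \<subseteq> V" using walk_path_set[OF xs(4) E_in xs(1)] xs(2) u0 by blast
    have "walk_path XE (map Inl xs)" unfolding walk_path_map using xs(4) by simp
    moreover have "set (map Inl xs) \<subseteq> XV" using sv unfolding xV_def by auto
    ultimately show ?thesis unfolding conn_def using xs
      by (intro exI[of _ "map Inl xs"]) (simp add: hd_map last_map)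
  qed
  have "conn XE XV (Inl u0) (Inr (l, k))"
  proof (induction k)
    case 0
    show ?case using conn_step[OF cl, of "Inr (l, 0)"] l unfolding xV_def by auto
  next
    case (Suc k)
    show ?case using conn_step[OF Suc, of "Inr (l, Suc k)"] l unfolding xV_def by auto
  qed
  then show ?thesis using p by simp
qed

lemma xacyclic:
  "\<nexists>xs. 3 \<le> length xs \<and> distinct xs \<and> walk_path XE xs \<and> XE (last xs) (hd xs)"
proof
  assume "\<exists>xs. 3 \<le> length xs \<and> distinct xs \<and> walk_path XE xs \<and> XE (last xs) (hd xs)"
  then obtain xs where xs: "3 \<le> length xs" "distinct xs" "walk_path XE xs" "XE (last xs) (hd xs)" by blast
  show False
  proof (cases "\<exists>l k. Inr (l, k) \<in> set xs")
    case True
    define K where "K = Max {k. \<exists>l. Inr (l, k) \<in> set xs}"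
    have fin: "finite {k. \<exists>l. Inr (l, k) \<in> set xs}"
    proof -
      have "{k. \<exists>l. Inr (l, k) \<in> set xs} \<subseteq> (\<lambda>z. case z of Inr (l, k) \<Rightarrow> k | Inl _ \<Rightarrow> 0) ` set xs"
        by (auto intro!: image_eqI)
      then show ?thesis by (rule finite_subset) simp
    qed
    have ne: "{k. \<exists>l. Inr (l, k) \<in> set xs} \<noteq> {}" using True by auto
    have "K \<in> {k. \<exists>l. Inr (l, k) \<in> set xs}" unfolding K_def using Max_in[OF fin ne] .
    then obtain l where lK: "Inr (l, K) \<in> set xs" by blast
    have mx: "\<And>l' k. Inr (l', k) \<in> set xs \<Longrightarrow> k \<le> K" unfolding K_def using fin by (auto intro: Max_ge)
    obtain j where j: "j < length xs" "xs ! j = Inr (l, K)" using lK by (metis in_set_conv_nth)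
    obtain p s where ps: "p \<in> set xs" "s \<in> set xs" "p \<noteq> s" "XE (Inr (l, K)) p" "XE (Inr (l, K)) s"
      using cycle_two_nbrs[of XE, OF xE_sym' xs(2) xs(1) xs(3) xs(4) j(1)] j(2) by auto
    have "\<And>z. z \<in> set xs \<Longrightarrow> XE (Inr (l, K)) z \<Longrightarrow> z = (if K = 0 then Inl l else Inr (l, K - 1))"
    proof -
      fix z assume z: "z \<in> set xs" "XE (Inr (l, K)) z"
      have "z \<noteq> Inr (l, Suc K)" using mx z(1) by fastforce
      then show "z = (if K = 0 then Inl l else Inr (l, K - 1))" using z(2) unfolding xE_Inr_iff by auto
    qed
    then show False using ps by metis
  next
    case False
    define ys where "ys = map projl xs"
    have xsys: "xs = map Inl ys"
    proof -
      have "\<forall>z\<in>set xs. isl z" using False by (metis isl_def sum.exhaust_sel surj_pair)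
      then show ?thesis unfolding ys_def by (induction xs) auto
    qed
    have "walk_path E ys" using xs(3) unfolding xsys walk_path_map by simp
    moreover have "distinct ys" using xs(2) unfolding xsys by (simp add: distinct_map)
    moreover have "3 \<le> length ys" using xs(1) unfolding xsys by simp
    moreover have "E (last ys) (hd ys)"
    proof -
      have "ys \<noteq> []" using xs(1) unfolding xsys by auto
      then show ?thesis using xs(4) unfolding xsys by (simp add: hd_map last_map)
    qed
    ultimately show False using tree unfolding is_tree_def by blast
  qed
qed

lemma xtree: "is_tree XV XE"
  unfolding is_tree_def
proof (intro conjI)
  show "\<forall>u w. XE u w \<longrightarrow> u \<in> XV \<and> w \<in> XV" using xE_in by blast
  show "\<forall>u w. XE u w \<longrightarrow> XE w u" using xE_sym' by blast
  show "\<forall>u. \<not> XE u u" using xE_irrefl by blast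
  show "\<forall>u\<in>XV. \<forall>w\<in>XV. \<exists>xs. xs \<noteq> [] \<and> hd xs = u \<and> last xs = w \<and> walk_path XE xs"
  proof (intro ballI)
    fix a b assume a: "a \<in> XV" and b: "b \<in> XV"
    obtain u0 where u0: "u0 \<in> V" using a unfolding xV_def by auto
    show "\<exists>xs. xs \<noteq> [] \<and> hd xs = a \<and> last xs = b \<and> walk_path XE xs"
      using conn_between[of XE, OF xE_sym' xconn[OF u0 a] xconn[OF u0 b]] by blast
  qed
  show "\<nexists>xs. 3 \<le> length xs \<and> distinct xs \<and> walk_path XE xs \<and> XE (last xs) (hd xs)"
    by (rule xacyclic)
qed

lemma h_lt: "x \<in> V \<Longrightarrow> h x < idg_size R \<Delta>" using lab unfolding proper_H_labeling_def by blast
lemma h_edge: "E x y \<Longrightarrow> H (col x y) (h x) (h y)" using lab unfolding proper_H_labeling_def by blast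

lemma xlab: "proper_H_labeling H R \<Delta> XV XE XC XH"
  unfolding proper_H_labeling_def
proof (intro conjI allI impI ballI)
  fix a assume a: "a \<in> XV"
  show "XH a < idg_size R \<Delta>"
  proof (cases a)
    case (Inl x) then show ?thesis using a h_lt unfolding xV_def by auto
  next
    case (Inr p)
    then obtain l k where p: "a = Inr (l, k)" by (cases p) auto
    then have "l \<in> V" using a unfolding xV_def by auto
    then show ?thesis using p rlab_ok[OF ID D2, of "obs E col h l"] h_lt by simp
  qed
next
  fix a b assume e: "XE a b"
  have up: "\<And>l k. l \<in> V \<Longrightarrow> H (outcol (cs l) k) (rlab H (obs E col h l) k) (rlab H (obs E col h l) (Suc k))"
  proof -
    fix l k assume l: "l \<in> V"
    have "rlab H (obs E col h l) k < idg_size R \<Delta>" using rlab_ok[OF ID D2] h_lt l by simp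
    then show "?thesis l k" using pick_ok[OF ID inout_range(2)] by simp
  qed
  have z: "\<And>l. l \<in> V \<Longrightarrow> H (ca (cs l)) (h l) (rlab H (obs E col h l) 0)"
    using pick_ok[OF ID ca_range(1)] h_lt by simp
  show "H (XC a b) (XH a) (XH b)"
  proof (cases a; cases b)
    fix x y assume "a = Inl x" "b = Inl y" then show ?thesis using e h_edge by simp
  next
    fix x q assume ab: "a = Inl x" "b = Inr q"
    then obtain l k where "q = (l, k)" by (cases q)
    then show ?thesis using e ab z by auto
  next
    fix x q assume ab: "a = Inr q" "b = Inl x"
    then obtain l k where "q = (l, k)" by (cases q)
    then show ?thesis using e ab z ID_sym[OF ID] by auto
  next
    fix q q' assume ab: "a = Inr q" "b = Inr q'"
    then obtain l k l' k' where "q = (l, k)" "q' = (l', k')" by (cases q, cases q')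
    then show ?thesis using e ab up ID_sym[OF ID] by (auto simp: min_def)
  qed
qed

lemma nbr_xInl:
  assumes x: "x \<in> V"
  shows "nbr XE XC (Inl x) c = (if c \<in> cs x then map_option Inl (nbr E col x c)
            else if leafy E col x \<and> c = ca (cs x) then Some (Inr (x, 0)) else None)"
proof (cases "c \<in> cs x")
  case True
  then obtain y where y: "nbr E col x c = Some y" using nbr_None_iff by (metis not_None_eq)
  then have "E x y" "col x y = c" using nbr_Some_iff[OF pc] by auto
  then have "nbr XE XC (Inl x) c = Some (Inl y)" using nbr_Some_iff[OF xpc] by simp
  then show ?thesis using True y by simp
next
  case False
  show ?thesis
  proof (cases "leafy E col x \<and> c = ca (cs x)")
    case True
    then have "nbr XE XC (Inl x) c = Some (Inr (x, 0))" using nbr_Some_iff[OF xpc] x by simp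
    then show ?thesis using True False by simp
  next
    case F2: False
    have "c \<notin> colors XE XC (Inl x)" using False F2 x unfolding colors_xInl by auto
    then show ?thesis using False F2 nbr_None_iff by metis
  qed
qed

lemma nbr_xInr:
  assumes l: "l \<in> V" "leafy E col l"
  shows "nbr XE XC (Inr (l, k)) c = (if c = incol (cs l) k then Some (if k = 0 then Inl l else Inr (l, k - 1))
            else if c = outcol (cs l) k then Some (Inr (l, Suc k)) else None)"
proof (cases "c = incol (cs l) k")
  case True
  show ?thesis
  proof (cases k)
    case 0
    then have "nbr XE XC (Inr (l, k)) c = Some (Inl l)" using nbr_Some_iff[OF xpc] l True incol_outcol(3) by simp
    then show ?thesis using True 0 by simp
  next
    case (Suc k')
    then have "nbr XE XC (Inr (l, k)) c = Some (Inr (l, k'))" using nbr_Some_iff[OF xpc] l True incol_outcol(2) by simp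
    then show ?thesis using True Suc by simp
  qed
next
  case False
  show ?thesis
  proof (cases "c = outcol (cs l) k")
    case True
    then have "nbr XE XC (Inr (l, k)) c = Some (Inr (l, Suc k))" using nbr_Some_iff[OF xpc] l by simp
    then show ?thesis using True False by simp
  next
    case F2: False
    have "c \<notin> {incol (cs l) k, outcol (cs l) k}" using False F2 by auto
    then have "c \<notin> colors XE XC (Inr (l, k))" using colors_xInr[OF l, of k] inout_eq[of l k] by simp
    then show ?thesis using False F2 nbr_None_iff by metis
  qed
qed

lemma obs_xInl: "obs XE XC XH (Inl x) = (h x, colors XE XC (Inl x))"
  unfolding obs_def[of XE XC XH] by simp
lemma obs_xInr: "obs XE XC XH (Inr (l, k)) = (rlab H (obs E col h l) k, colors XE XC (Inr (l, k)))"
  unfolding obs_def[of XE XC XH] by simp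

end

datatype pos = Real "nat list" | Virt "nat list" nat

type_synonym view_t = "nat list \<Rightarrow> (nat \<times> nat set) option"

definition stepF :: "view_t \<Rightarrow> pos \<Rightarrow> nat \<Rightarrow> pos option" where
 "stepF vw q c = (case q of
    Real p \<Rightarrow> (case vw p of None \<Rightarrow> None | Some ob \<Rightarrow>
        if c \<in> snd ob then Some (Real (p @ [c]))
        else if card (snd ob) \<le> 1 \<and> c = ca (snd ob) then Some (Virt p 0) else None)
  | Virt p k \<Rightarrow> (case vw p of None \<Rightarrow> None | Some ob \<Rightarrow>
        if c = incol (snd ob) k then Some (if k = 0 then Real p else Virt p (k - 1))
        else if c = outcol (snd ob) k then Some (Virt p (Suc k)) else None))"

definition obsF :: "(nat \<Rightarrow> nat \<Rightarrow> nat \<Rightarrow> bool) \<Rightarrow> view_t \<Rightarrow> pos \<Rightarrow> nat \<times> nat set" where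
 "obsF H vw q = (case q of
    Real p \<Rightarrow> (case vw p of None \<Rightarrow> undefined | Some ob \<Rightarrow>
       (fst ob, if card (snd ob) \<le> 1 then insert (ca (snd ob)) (snd ob) else snd ob))
  | Virt p k \<Rightarrow> (case vw p of None \<Rightarrow> undefined | Some ob \<Rightarrow> (rlab H ob k, {ca (snd ob), cb (snd ob)})))"

fun lexec :: "volume_alg \<Rightarrow> nat \<Rightarrow> (nat \<Rightarrow> nat \<Rightarrow> nat \<Rightarrow> bool) \<Rightarrow> view_t \<Rightarrow> nat \<Rightarrow> pos list \<Rightarrow> nat set option" where
  "lexec A n H vw 0 ps = (case A n (map (obsF H vw) ps) of VOutput S \<Rightarrow> Some S | VProbe i c \<Rightarrow> None)"
| "lexec A n H vw (Suc k) ps = (case A n (map (obsF H vw) ps) of VOutput S \<Rightarrow> Some S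
     | VProbe i c \<Rightarrow> if i < length ps then (case stepF vw (ps ! i) c of Some q \<Rightarrow> lexec A n H vw k (ps @ [q])
                                          | None \<Rightarrow> None) else None)"

fun plen :: "pos \<Rightarrow> nat" where
  "plen (Real p) = length p"
| "plen (Virt p k) = length p"

lemma walk_snoc: "walk E col v (p @ [c]) = (case walk E col v p of None \<Rightarrow> None | Some x \<Rightarrow> nbr E col x c)"
  by (induction p arbitrary: v) (auto split: option.splits)

context xt
begin

fun node :: "'v \<Rightarrow> pos \<Rightarrow> 'v + 'v \<times> nat" where
  "node v (Real p) = Inl (the (walk E col v p))"
| "node v (Virt p k) = Inr (the (walk E col v p), k)"

fun valid :: "'v \<Rightarrow> pos \<Rightarrow> bool" where
  "valid v (Real p) = (walk E col v p \<noteq> None)"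
| "valid v (Virt p k) = (\<exists>l. walk E col v p = Some l \<and> leafy E col l)"

lemma walk_in: "v \<in> V \<Longrightarrow> walk E col v p = Some x \<Longrightarrow> x \<in> V"
proof (induction p arbitrary: v)
  case (Cons c p)
  then obtain w where w: "nbr E col v c = Some w" "walk E col w p = Some x" by (auto split: option.splits)
  then have "E v w" using nbr_Some_iff[OF pc] by blast
  then show ?case using Cons w E_in by blast
qed simp

lemma view_some: "length p \<le> t \<Longrightarrow> walk E col v p = Some x \<Longrightarrow> view E col h t v p = Some (obs E col h x)"
  unfolding view_def by simp

lemma obsF_ok:
  assumes v: "v \<in> V" and q: "valid v q" "plen q \<le> t"
  shows "obsF H (view E col h t v) q = obs XE XC XH (node v q)"
proof (cases q)
  case (Real p)
  then obtain x where x: "walk E col v p = Some x" using q by auto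
  have xV: "x \<in> V" using walk_in[OF v x] .
  have vw: "view E col h t v p = Some (obs E col h x)" using view_some x q Real by simp
  show ?thesis using Real x vw xV by (auto simp: obsF_def obs_xInl colors_xInl leafy_def)
next
  case (Virt p k)
  then obtain l where l: "walk E col v p = Some l" "leafy E col l" using q by auto
  have lV: "l \<in> V" using walk_in[OF v l(1)] .
  have vw: "view E col h t v p = Some (obs E col h l)" using view_some l q Virt by simp
  show ?thesis using Virt l vw lV by (auto simp: obsF_def obs_xInr colors_xInr[OF lV l(2)])
qed

lemma stepF_ok:
  assumes v: "v \<in> V" and q: "valid v q" "plen q \<le> t"
  shows "(case stepF (view E col h t v) q c of
            None \<Rightarrow> nbr XE XC (node v q) c = None
          | Some q' \<Rightarrow> valid v q' \<and> plen q' \<le> Suc (plen q) \<and> nbr XE XC (node v q) c = Some (node v q'))"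
proof (cases q)
  case (Real p)
  then obtain x where x: "walk E col v p = Some x" using q by auto
  have xV: "x \<in> V" using walk_in[OF v x] .
  have vw: "view E col h t v p = Some (obs E col h x)" using view_some x q Real by simp
  have nb: "nbr XE XC (Inl x) c = (if c \<in> cs x then map_option Inl (nbr E col x c)
            else if leafy E col x \<and> c = ca (cs x) then Some (Inr (x, 0)) else None)"
    by (rule nbr_xInl[OF xV])
  show ?thesis
  proof (cases "c \<in> cs x")
    case True
    then obtain y where y: "nbr E col x c = Some y" using nbr_None_iff by (metis not_None_eq)
    have wy: "walk E col v (p @ [c]) = Some y" by (simp add: walk_snoc x y)
    show ?thesis using Real True vw x y wy nb unfolding stepF_def by simp
  next
    case False
    show ?thesis using Real False vw x nb by (auto simp: stepF_def leafy_def)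
  qed
next
  case (Virt p k)
  then obtain l where l: "walk E col v p = Some l" "leafy E col l" using q by auto
  have lV: "l \<in> V" using walk_in[OF v l(1)] .
  have vw: "view E col h t v p = Some (obs E col h l)" using view_some l q Virt by simp
  have nb: "nbr XE XC (Inr (l, k)) c = (if c = incol (cs l) k then Some (if k = 0 then Inl l else Inr (l, k - 1))
            else if c = outcol (cs l) k then Some (Inr (l, Suc k)) else None)"
    by (rule nbr_xInr[OF lV l(2)])
  show ?thesis using Virt vw l nb unfolding stepF_def by auto
qed

lemma SIM:
  assumes v: "v \<in> V"
  shows "(\<forall>q\<in>set ps. valid v q \<and> plen q + k \<le> t) \<Longrightarrow>
    lexec A n H (view E col h t v) k ps = vexec A n XE XC XH k (map (node v) ps)"
proof (induction k arbitrary: ps)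
  case 0
  have "map (obsF H (view E col h t v)) ps = map (obs XE XC XH) (map (node v) ps)"
    using obsF_ok[OF v] 0 by auto
  then show ?case by (simp del: map_map)
next
  case (Suc k)
  have m: "map (obsF H (view E col h t v)) ps = map (obs XE XC XH) (map (node v) ps)"
    using obsF_ok[OF v] Suc.prems by auto
  show ?case
  proof (cases "A n (map (obsF H (view E col h t v)) ps)")
    case (VOutput S)
    then show ?thesis using m by (simp del: map_map)
  next
    case (VProbe i c)
    show ?thesis
    proof (cases "i < length ps")
      case False
      then show ?thesis using VProbe m by (simp del: map_map)
    next
      case True
      have qi: "valid v (ps ! i)" "plen (ps ! i) + Suc k \<le> t" using Suc.prems True nth_mem by blast+
      have st: "case stepF (view E col h t v) (ps ! i) c of
            None \<Rightarrow> nbr XE XC (node v (ps ! i)) c = None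
          | Some q' \<Rightarrow> valid v q' \<and> plen q' \<le> Suc (plen (ps ! i)) \<and> nbr XE XC (node v (ps ! i)) c = Some (node v q')"
        using stepF_ok[OF v qi(1)] qi(2) by simp
      show ?thesis
      proof (cases "stepF (view E col h t v) (ps ! i) c")
        case None
        then show ?thesis using st VProbe True m by (simp del: map_map)
      next
        case (Some q')
        have "\<forall>q\<in>set (ps @ [q']). valid v q \<and> plen q + k \<le> t" using Suc.prems st Some qi by auto
        then have "lexec A n H (view E col h t v) k (ps @ [q']) = vexec A n XE XC XH k (map (node v) (ps @ [q']))"
          by (rule Suc.IH)
        then show ?thesis using st Some VProbe True m by (simp del: map_map)
      qed
    qed
  qed
qed

end

lemma tree_acyc: "is_tree V E \<Longrightarrow> 3 \<le> length xs \<Longrightarrow> distinct xs \<Longrightarrow> walk_path E xs \<Longrightarrow> E (last xs) (hd xs) \<Longrightarrow> False"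
  using conjunct2[OF conjunct2[OF conjunct2[OF conjunct2[OF iffD1[OF is_tree_def]]]]] by blast

lemma tree_conn: "is_tree V E \<Longrightarrow> u \<in> V \<Longrightarrow> w \<in> V \<Longrightarrow> \<exists>xs. xs \<noteq> [] \<and> hd xs = u \<and> last xs = w \<and> walk_path E xs"
  using conjunct1[OF conjunct2[OF conjunct2[OF conjunct2[OF iffD1[OF is_tree_def]]]]] by blast

lemma tree_in: "is_tree V E \<Longrightarrow> E a b \<Longrightarrow> a \<in> V \<and> b \<in> V"
  unfolding is_tree_def by blast
lemma tree_sym: "is_tree V E \<Longrightarrow> E a b \<Longrightarrow> E b a"
  unfolding is_tree_def by blast
lemma tree_irr: "is_tree V E \<Longrightarrow> \<not> E a a"
  unfolding is_tree_def by blast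

fun seqx :: "('v \<Rightarrow> 'v \<Rightarrow> 'v) \<Rightarrow> 'v \<Rightarrow> 'v \<Rightarrow> nat \<Rightarrow> 'v" where
  "seqx nx u u1 0 = u"
| "seqx nx u u1 (Suc 0) = u1"
| "seqx nx u u1 (Suc (Suc i)) = nx (seqx nx u u1 i) (seqx nx u u1 (Suc i))"

lemma finite_tree_leaf:
  assumes tree: "is_tree V E" and fin: "finite V" and u: "u \<in> V"
  shows "\<exists>l\<in>V. \<forall>a b. E l a \<and> E l b \<longrightarrow> a = b"
proof (rule ccontr)
  assume "\<not> ?thesis"
  then have two: "\<And>l. l \<in> V \<Longrightarrow> \<exists>a b. E l a \<and> E l b \<and> a \<noteq> b" by blast
  have ex: "\<And>l p. l \<in> V \<Longrightarrow> \<exists>z. E l z \<and> z \<noteq> p" using two by metis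
  have Ein: "\<And>a b. E a b \<Longrightarrow> a \<in> V \<and> b \<in> V" using tree_in[OF tree] by blast
  have irr: "\<And>a. \<not> E a a" using tree_irr[OF tree] by blast
  define nx where "nx = (\<lambda>p l. SOME z. E l z \<and> z \<noteq> p)"
  have nx: "\<And>p l. l \<in> V \<Longrightarrow> E l (nx p l) \<and> nx p l \<noteq> p" unfolding nx_def using ex by (metis (mono_tags, lifting) someI_ex)
  obtain u1 where u1: "E u u1" using ex[OF u] by blast
  define x where "x = seqx nx u u1"
  have inv: "x i \<in> V \<and> x (Suc i) \<in> V \<and> E (x i) (x (Suc i))" for i
  proof (induction i)
    case 0 then show ?case using u1 Ein unfolding x_def by auto
  next
    case (Suc i)
    have "x (Suc (Suc i)) = nx (x i) (x (Suc i))" unfolding x_def by simp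
    then show ?case using Suc nx[of "x (Suc i)" "x i"] Ein by auto
  qed
  have nb: "x (Suc (Suc i)) \<noteq> x i" for i
  proof -
    have "x (Suc (Suc i)) = nx (x i) (x (Suc i))" unfolding x_def by simp
    then show ?thesis using nx inv by auto
  qed
  have "\<not> inj_on x {0..card V}"
  proof
    assume "inj_on x {0..card V}"
    moreover have "x ` {0..card V} \<subseteq> V" using inv by auto
    ultimately have "card {0..card V} \<le> card V" using card_inj_on_le fin by blast
    then show False by simp
  qed
  then obtain a b where ab: "a \<noteq> b" "x a = x b" unfolding inj_on_def by blast
  have "\<exists>j. \<exists>i<j. x i = x j"
  proof (cases "a < b")
    case True then show ?thesis using ab by blast
  next
    case False then have "b < a" using ab(1) by linarith
    then show ?thesis using ab by metis
  qed
  define J where "J = (LEAST j. \<exists>i<j. x i = x j)"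
  have J: "\<exists>i<J. x i = x J" unfolding J_def by (rule LeastI_ex) fact
  have minJ: "\<And>a b. a < b \<Longrightarrow> b < J \<Longrightarrow> x a \<noteq> x b"
  proof -
    fix a b assume ab: "a < b" "b < J"
    show "x a \<noteq> x b"
    proof
      assume "x a = x b"
      then have "\<exists>i<b. x i = x b" using ab by blast
      then have "J \<le> b" unfolding J_def by (rule Least_le)
      then show False using ab by simp
    qed
  qed
  obtain i where i: "i < J" "x i = x J" using J by blast
  define zs where "zs = map x [i..<J]"
  have len: "length zs = J - i" unfolding zs_def by simp
  have l3: "3 \<le> length zs"
  proof -
    have "J \<noteq> Suc i" using i inv[of i] irr by metis
    moreover have "J \<noteq> Suc (Suc i)" using i nb[of i] by metis
    ultimately show ?thesis using len i by linarith
  qed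
  have "inj_on x {i..<J}"
    unfolding inj_on_def
  proof (intro ballI impI)
    fix a b assume ab: "a \<in> {i..<J}" "b \<in> {i..<J}" "x a = x b"
    show "a = b"
    proof (rule ccontr)
      assume "a \<noteq> b"
      then have "a < b \<or> b < a" by linarith
      then show False using minJ ab by (metis atLeastLessThan_iff)
    qed
  qed
  then have d: "distinct zs" unfolding zs_def by (simp add: distinct_map)
  have w: "walk_path E zs" unfolding walk_path_def
  proof (intro allI impI)
    fix j assume "Suc j < length zs"
    then have "zs ! j = x (i + j)" "zs ! Suc j = x (Suc (i + j))" unfolding zs_def by simp_all
    then show "E (zs ! j) (zs ! Suc j)" using inv[of "i + j"] by simp
  qed
  have "last zs = x (J - 1)" "hd zs = x i" unfolding zs_def using i
    by (auto simp: last_map hd_map)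
  moreover have "E (x (J - 1)) (x J)" using inv[of "J - 1"] i by simp
  ultimately have "E (last zs) (hd zs)" using i by simp
  then show False using tree_acyc[OF tree l3 d w] by blast
qed

lemma walk_exit:
  "walk_path E xs \<Longrightarrow> xs \<noteq> [] \<Longrightarrow> hd xs \<in> S \<Longrightarrow> last xs \<notin> S \<Longrightarrow> \<exists>x y. x \<in> S \<and> y \<notin> S \<and> E x y"
proof (induction xs)
  case (Cons a xs)
  show ?case
  proof (cases "xs = []")
    case True then show ?thesis using Cons.prems by simp
  next
    case False
    then obtain b ys where xs: "xs = b # ys" by (cases xs) auto
    have ab: "E a b" "walk_path E xs" using Cons.prems(1) xs by simp_all
    have la: "last xs \<notin> S" using Cons.prems(4) xs by simp
    show ?thesis
    proof (cases "b \<in> S")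
      case True
      then show ?thesis using Cons.IH[OF ab(2) False _ la] xs by simp
    next
      case False
      then show ?thesis using ab(1) Cons.prems(3) by auto
    qed
  qed
qed simp

lemma tree_ext:
  assumes tree: "is_tree V E" and inf: "infinite V" and S: "finite S" "S \<subseteq> V" "u \<in> S"
  shows "\<exists>x\<in>S. \<exists>y. y \<notin> S \<and> E x y \<and> y \<in> V"
proof -
  obtain z where z: "z \<in> V" "z \<notin> S" using inf S by (metis finite_subset subsetI)
  obtain xs where xs: "xs \<noteq> []" "hd xs = u" "last xs = z" "walk_path E xs"
    using tree_conn[OF tree _ z(1)] S by blast
  have "\<exists>a b. a \<in> S \<and> b \<notin> S \<and> E a b" using walk_exit[OF xs(4) xs(1), of S] xs z S by simp
  then obtain a b where "a \<in> S" "b \<notin> S" "E a b" by blast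
  then show ?thesis using tree_in[OF tree] by blast
qed

lemma grow:
  assumes ext: "\<And>S. finite S \<Longrightarrow> S \<subseteq> V \<Longrightarrow> u \<in> S \<Longrightarrow> \<exists>x\<in>S. \<exists>y. y \<notin> S \<and> E x y \<and> y \<in> V"
  shows "finite S0 \<Longrightarrow> S0 \<subseteq> V \<Longrightarrow> u \<in> S0 \<Longrightarrow> (\<forall>y\<in>S0. conn E S0 u y) \<Longrightarrow> card S0 + k = m \<Longrightarrow>
    \<exists>S. S0 \<subseteq> S \<and> S \<subseteq> V \<and> finite S \<and> card S = m \<and> (\<forall>y\<in>S. conn E S u y)"
proof (induction k arbitrary: S0)
  case 0 then show ?case by (intro exI[of _ S0]) simp
next
  case (Suc k)
  obtain x y where xy: "x \<in> S0" "y \<notin> S0" "E x y" "y \<in> V" using ext[OF Suc.prems(1-3)] by blast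
  define S1 where "S1 = insert y S0"
  have c1: "card S1 + k = m" unfolding S1_def using Suc.prems(1,5) xy(2) by simp
  have cn: "\<forall>z\<in>S1. conn E S1 u z"
  proof
    fix z assume zS: "z \<in> S1"
    show "conn E S1 u z"
    proof (cases "z = y")
      case True
      have "conn E S1 u x" using Suc.prems(4) xy(1) conn_mono[of E S0 u x S1] unfolding S1_def by blast
      moreover have "y \<in> S1" unfolding S1_def by simp
      ultimately show ?thesis using conn_step[of E S1 u x y] True xy(3) by blast
    next
      case False
      then have "z \<in> S0" using zS unfolding S1_def by simp
      then show ?thesis using Suc.prems(4) conn_mono[of E S0 u z S1] unfolding S1_def by blast
    qed
  qed
  have "\<exists>S. S1 \<subseteq> S \<and> S \<subseteq> V \<and> finite S \<and> card S = m \<and> (\<forall>y\<in>S. conn E S u y)"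
  proof -
    have "finite S1" "S1 \<subseteq> V" "u \<in> S1" using Suc.prems(1-3) xy(4) unfolding S1_def by auto
    then show ?thesis using Suc.IH cn c1 by blast
  qed
  then show ?case unfolding S1_def by blast
qed

lemma walk_path_mono_on:
  "walk_path E xs \<Longrightarrow> (\<And>a b. a \<in> set xs \<Longrightarrow> b \<in> set xs \<Longrightarrow> E a b \<Longrightarrow> E' a b) \<Longrightarrow> walk_path E' xs"
  unfolding walk_path_def by (meson Suc_lessD nth_mem)

lemma induced_nat:
  fixes E :: "'a \<Rightarrow> 'a \<Rightarrow> bool" and col :: "'a \<Rightarrow> 'a \<Rightarrow> nat" and h :: "'a \<Rightarrow> nat"
  assumes tree: "is_tree V E" and deg: "max_deg_le V E \<Delta>" and pc: "proper_edge_col E col \<Delta>"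
    and lab: "proper_H_labeling H R \<Delta> V E col h"
    and S: "finite S" "S \<subseteq> V" "\<forall>y\<in>S. conn E S u y"
  shows "\<exists>(\<sigma> :: 'a \<Rightarrow> nat) V' E' col' h'. finite V' \<and> card V' = card S \<and> is_tree V' E' \<and> max_deg_le V' E' \<Delta> \<and>
     proper_edge_col E' col' \<Delta> \<and> proper_H_labeling H R \<Delta> V' E' col' h' \<and> (\<forall>x\<in>S. \<sigma> x \<in> V') \<and>
     (\<forall>x\<in>S. \<forall>y\<in>S. E x y \<longrightarrow> E' (\<sigma> x) (\<sigma> y) \<and> col' (\<sigma> x) (\<sigma> y) = col x y) \<and>
     (\<forall>x\<in>S. (\<forall>y. E x y \<longrightarrow> y \<in> S) \<longrightarrow> obs E' col' h' (\<sigma> x) = obs E col h x \<and>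
         (\<forall>c. nbr E' col' (\<sigma> x) c = map_option \<sigma> (nbr E col x c)) \<and> card {w. E' (\<sigma> x) w} = card {w. E x w})"
proof -
  define m where "m = card S"
  obtain \<tau> where \<tau>: "bij_betw \<tau> {0..<m} S" using ex_bij_betw_nat_finite[OF S(1)] unfolding m_def by blast
  define \<sigma> where "\<sigma> = inv_into {0..<m} \<tau>"
  have \<sigma>S: "\<And>x. x \<in> S \<Longrightarrow> \<sigma> x < m \<and> \<tau> (\<sigma> x) = x"
    using \<tau> unfolding \<sigma>_def by (metis atLeastLessThan_iff bij_betw_imp_surj_on bij_betw_inv_into_right inv_into_into)
  have \<tau>m: "\<And>a. a < m \<Longrightarrow> \<tau> a \<in> S \<and> \<sigma> (\<tau> a) = a"
    using \<tau> unfolding \<sigma>_def by (metis atLeastLessThan_iff bij_betwE bij_betw_inv_into_left zero_le)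
  define V' where "V' = {0..<m}"
  define E' where "E' = (\<lambda>a b. a < m \<and> b < m \<and> E (\<tau> a) (\<tau> b))"
  define col' where "col' = (\<lambda>a b. col (\<tau> a) (\<tau> b))"
  define h' where "h' = (\<lambda>a. h (\<tau> a))"
  have Ein: "\<And>a b. E a b \<Longrightarrow> a \<in> V \<and> b \<in> V" using tree_in[OF tree] .
  have Esym: "\<And>a b. E a b \<Longrightarrow> E b a" using tree_sym[OF tree] .
  have E'sym: "\<And>a b. E' a b \<Longrightarrow> E' b a" unfolding E'_def using Esym by blast
  have E'S: "\<And>x y. x \<in> S \<Longrightarrow> y \<in> S \<Longrightarrow> E' (\<sigma> x) (\<sigma> y) \<longleftrightarrow> E x y" unfolding E'_def using \<sigma>S by auto
  have tr: "is_tree V' E'"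
    unfolding is_tree_def
  proof (intro conjI)
    show "\<forall>u w. E' u w \<longrightarrow> u \<in> V' \<and> w \<in> V'" unfolding E'_def V'_def by auto
    show "\<forall>u w. E' u w \<longrightarrow> E' w u" using E'sym by blast
    show "\<forall>u. \<not> E' u u" unfolding E'_def using tree_irr[OF tree] by blast
    show "\<forall>a\<in>V'. \<forall>b\<in>V'. \<exists>xs. xs \<noteq> [] \<and> hd xs = a \<and> last xs = b \<and> walk_path E' xs"
    proof (intro ballI)
      fix a b assume ab: "a \<in> V'" "b \<in> V'"
      then have ab': "\<tau> a \<in> S" "\<tau> b \<in> S" "\<sigma> (\<tau> a) = a" "\<sigma> (\<tau> b) = b" using \<tau>m unfolding V'_def by auto
      obtain zs where zs: "zs \<noteq> []" "hd zs = \<tau> a" "last zs = \<tau> b" "walk_path E zs" "set zs \<subseteq> S"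
        using conn_between[of E, OF Esym S(3)[rule_format, OF ab'(1)] S(3)[rule_format, OF ab'(2)]] by blast
      have "walk_path (\<lambda>p q. E' (\<sigma> p) (\<sigma> q)) zs"
      proof (rule walk_path_mono_on[OF zs(4)])
        fix p q assume "p \<in> set zs" "q \<in> set zs" "E p q"
        then show "E' (\<sigma> p) (\<sigma> q)" using E'S zs(5) by blast
      qed
      then have "walk_path E' (map \<sigma> zs)" unfolding walk_path_map .
      moreover have "hd (map \<sigma> zs) = a" "last (map \<sigma> zs) = b" using zs ab' by (simp_all add: hd_map last_map)
      ultimately show "\<exists>xs. xs \<noteq> [] \<and> hd xs = a \<and> last xs = b \<and> walk_path E' xs" using zs(1)
        by (intro exI[of _ "map \<sigma> zs"]) simp
    qed
    show "\<nexists>xs. 3 \<le> length xs \<and> distinct xs \<and> walk_path E' xs \<and> E' (last xs) (hd xs)"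
    proof
      assume "\<exists>xs. 3 \<le> length xs \<and> distinct xs \<and> walk_path E' xs \<and> E' (last xs) (hd xs)"
      then obtain ys where ys: "3 \<le> length ys" "distinct ys" "walk_path E' ys" "E' (last ys) (hd ys)" by blast
      have yne: "ys \<noteq> []" using ys(1) by auto
      have "set ys \<subseteq> {0..<m}"
        by (rule walk_path_set[OF ys(3)]) (use ys(4) yne in \<open>auto simp: E'_def\<close>)
      then have inj: "inj_on \<tau> (set ys)" using \<tau> unfolding bij_betw_def by (meson inj_on_subset)
      have "walk_path (\<lambda>a b. E (\<tau> a) (\<tau> b)) ys"
      proof (rule walk_path_mono[OF ys(3)])
        fix a b assume "E' a b" then show "E (\<tau> a) (\<tau> b)" unfolding E'_def by simp
      qed
      then have "walk_path E (map \<tau> ys)" unfolding walk_path_map .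
      moreover have "distinct (map \<tau> ys)" using ys(2) inj by (simp add: distinct_map)
      moreover have "E (last (map \<tau> ys)) (hd (map \<tau> ys))" using ys(4) yne unfolding E'_def
        by (simp add: hd_map last_map)
      moreover have "3 \<le> length (map \<tau> ys)" using ys(1) by simp
      ultimately show False using tree_acyc[OF tree] by blast
    qed
  qed
  have dg: "max_deg_le V' E' \<Delta>"
    unfolding max_deg_le_def
  proof
    fix a assume a: "a \<in> V'"
    then have ta: "\<tau> a \<in> V" using \<tau>m S(2) unfolding V'_def by auto
    have sub: "{b. E' a b} \<subseteq> \<sigma> ` {y. E (\<tau> a) y}"
    proof
      fix b assume "b \<in> {b. E' a b}"
      then have "b < m" "E (\<tau> a) (\<tau> b)" unfolding E'_def by auto
      then show "b \<in> \<sigma> ` {y. E (\<tau> a) y}" using \<tau>m by (metis (mono_tags, lifting) imageI mem_Collect_eq)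
    qed
    have f: "finite {y. E (\<tau> a) y}" "card {y. E (\<tau> a) y} \<le> \<Delta>" using deg ta unfolding max_deg_le_def by auto
    have "card {b. E' a b} \<le> card (\<sigma> ` {y. E (\<tau> a) y})" using sub f by (simp add: card_mono)
    also have "\<dots> \<le> card {y. E (\<tau> a) y}" by (rule card_image_le[OF f(1)])
    finally show "finite {b. E' a b} \<and> card {b. E' a b} \<le> \<Delta>" using f sub by (meson finite_imageI finite_subset le_trans)
  qed
  have pc1: "\<forall>a b. E' a b \<longrightarrow> col' a b = col' b a \<and> col' a b \<in> {1..\<Delta>}"
  proof (intro allI impI)
    fix a b assume "E' a b"
    then have "E (\<tau> a) (\<tau> b)" unfolding E'_def by simp
    then show "col' a b = col' b a \<and> col' a b \<in> {1..\<Delta>}" using pc unfolding proper_edge_col_def col'_def by blast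
  qed
  have pc2: "\<forall>a b b'. E' a b \<and> E' a b' \<and> col' a b = col' a b' \<longrightarrow> b = b'"
  proof (intro allI impI)
    fix a b b' assume h: "E' a b \<and> E' a b' \<and> col' a b = col' a b'"
    then have "\<tau> b = \<tau> b'" using pc unfolding proper_edge_col_def col'_def E'_def by blast
    then show "b = b'" using h \<tau>m unfolding E'_def by metis
  qed
  have pc': "proper_edge_col E' col' \<Delta>"
    unfolding proper_edge_col_def using pc1 pc2 by blast
  have lb: "proper_H_labeling H R \<Delta> V' E' col' h'"
    unfolding proper_H_labeling_def
  proof (intro conjI allI impI ballI)
    fix a assume "a \<in> V'"
    then have "\<tau> a \<in> V" using \<tau>m S(2) unfolding V'_def by auto
    then show "h' a < idg_size R \<Delta>" using lab unfolding proper_H_labeling_def h'_def by blast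
  next
    fix a b assume "E' a b"
    then show "H (col' a b) (h' a) (h' b)" using lab unfolding proper_H_labeling_def h'_def col'_def E'_def by blast
  qed
  have loc: "\<forall>x\<in>S. (\<forall>y. E x y \<longrightarrow> y \<in> S) \<longrightarrow> obs E' col' h' (\<sigma> x) = obs E col h x \<and>
         (\<forall>c. nbr E' col' (\<sigma> x) c = map_option \<sigma> (nbr E col x c)) \<and> card {w. E' (\<sigma> x) w} = card {w. E x w}"
  proof (intro ballI impI)
    fix x assume x: "x \<in> S" and nS: "\<forall>y. E x y \<longrightarrow> y \<in> S"
    have nb: "{w. E' (\<sigma> x) w} = \<sigma> ` {y. E x y}"
    proof
      show "{w. E' (\<sigma> x) w} \<subseteq> \<sigma> ` {y. E x y}"
      proof
        fix w assume "w \<in> {w. E' (\<sigma> x) w}"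
        then have "w < m" "E x (\<tau> w)" unfolding E'_def using \<sigma>S[OF x] by auto
        then show "w \<in> \<sigma> ` {y. E x y}" using \<tau>m by (metis (mono_tags, lifting) imageI mem_Collect_eq)
      qed
      show "\<sigma> ` {y. E x y} \<subseteq> {w. E' (\<sigma> x) w}" using E'S x nS by auto
    qed
    have injS: "inj_on \<sigma> S" using \<sigma>S unfolding inj_on_def by metis
    have c1: "card {w. E' (\<sigma> x) w} = card {w. E x w}"
      unfolding nb using inj_on_subset[OF injS] nS by (simp add: card_image subset_iff)
    have colx: "\<And>y. y \<in> S \<Longrightarrow> col' (\<sigma> x) (\<sigma> y) = col x y" unfolding col'_def using \<sigma>S x by simp
    have cc: "colors E' col' (\<sigma> x) = colors E col x"
    proof (rule set_eqI)
      fix c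
      show "c \<in> colors E' col' (\<sigma> x) \<longleftrightarrow> c \<in> colors E col x"
        unfolding colors_def mem_Collect_eq
      proof
        assume "\<exists>w. E' (\<sigma> x) w \<and> col' (\<sigma> x) w = c"
        then obtain w where w: "E' (\<sigma> x) w" "col' (\<sigma> x) w = c" by blast
        then obtain y where y: "E x y" "w = \<sigma> y" using nb by blast
        then show "\<exists>w. E x w \<and> col x w = c" using w colx nS by metis
      next
        assume "\<exists>w. E x w \<and> col x w = c"
        then obtain y where y: "E x y" "col x y = c" by blast
        then show "\<exists>w. E' (\<sigma> x) w \<and> col' (\<sigma> x) w = c" using E'S colx nS x by metis
      qed
    qed
    have ob: "obs E' col' h' (\<sigma> x) = obs E col h x" unfolding obs_def h'_def using cc \<sigma>S[OF x] by simp
    have nbr: "nbr E' col' (\<sigma> x) c = map_option \<sigma> (nbr E col x c)" for c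
    proof (cases "nbr E col x c")
      case None
      then have "c \<notin> colors E col x" using nbr_None_iff by metis
      then have "nbr E' col' (\<sigma> x) c = None" using cc nbr_None_iff by metis
      then show ?thesis using None by simp
    next
      case (Some y)
      then have "E x y" "col x y = c" using nbr_Some_iff[OF pc] by auto
      then have "E' (\<sigma> x) (\<sigma> y)" "col' (\<sigma> x) (\<sigma> y) = c" using E'S colx nS x by auto
      then have "nbr E' col' (\<sigma> x) c = Some (\<sigma> y)" using nbr_Some_iff[OF pc'] by blast
      then show ?thesis using Some by simp
    qed
    show "obs E' col' h' (\<sigma> x) = obs E col h x \<and>
         (\<forall>c. nbr E' col' (\<sigma> x) c = map_option \<sigma> (nbr E col x c)) \<and> card {w. E' (\<sigma> x) w} = card {w. E x w}"
      using ob nbr c1 by blast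
  qed
  have ed: "\<forall>x\<in>S. \<forall>y\<in>S. E x y \<longrightarrow> E' (\<sigma> x) (\<sigma> y) \<and> col' (\<sigma> x) (\<sigma> y) = col x y"
    using E'S \<sigma>S unfolding col'_def by auto
  have "finite V'" "card V' = card S" unfolding V'_def m_def by auto
  moreover have "\<forall>x\<in>S. \<sigma> x \<in> V'" using \<sigma>S unfolding V'_def by auto
  ultimately show ?thesis
    apply -
    apply (rule exI[of _ \<sigma>], rule exI[of _ V'], rule exI[of _ E'], rule exI[of _ col'], rule exI[of _ h'])
    using tr dg pc' lb loc ed by blast
qed

context xt
begin

lemma XV_infinite:
  assumes u: "u \<in> V"
  shows "infinite XV"
proof (cases "finite V")
  case False
  have "Inl ` V \<subseteq> XV" unfolding xV_def by auto
  moreover have "infinite (Inl ` V :: ('v + 'v \<times> nat) set)" using False by (simp add: finite_image_iff)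
  ultimately show ?thesis using finite_subset by blast
next
  case True
  obtain l where l: "l \<in> V" "\<forall>a b. E l a \<and> E l b \<longrightarrow> a = b" using finite_tree_leaf[OF tree True u] by blast
  have f: "finite {y. E l y}" using deg l(1) unfolding max_deg_le_def by blast
  have "card {y. E l y} \<le> Suc 0" using card_le_Suc0_iff_eq[OF f] l(2) by blast
  then have lf: "leafy E col l" unfolding leafy_def using card_colors[OF deg l(1) pc] by simp
  have "range (\<lambda>k. Inr (l, k)) \<subseteq> XV" unfolding xV_def using l(1) lf by auto
  moreover have "infinite (range (\<lambda>k. Inr (l, k)) :: ('v + 'v \<times> nat) set)"
  proof
    assume "finite (range (\<lambda>k. Inr (l, k)) :: ('v + 'v \<times> nat) set)"
    then have "finite (UNIV :: nat set)" by (rule finite_imageD) (simp add: inj_on_def)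
    then show False by simp
  qed
  ultimately show ?thesis using finite_subset by blast
qed

lemma card_S0:
  assumes D: "finite D" "D \<subseteq> XV" and nb: "\<forall>x\<in>D. \<exists>z\<in>D. XE x z"
  shows "finite (D \<union> {y. \<exists>x\<in>D. XE x y}) \<and> card (D \<union> {y. \<exists>x\<in>D. XE x y}) \<le> card D * \<Delta>"
proof -
  define p where "p = (\<lambda>x. SOME z. z \<in> D \<and> XE x z)"
  have p: "\<And>x. x \<in> D \<Longrightarrow> p x \<in> D \<and> XE x (p x)" unfolding p_def using nb by (metis (mono_tags, lifting) someI_ex)
  have fx: "\<And>x. x \<in> D \<Longrightarrow> finite {y. XE x y} \<and> card {y. XE x y} \<le> \<Delta>" using xdeg D(2) unfolding max_deg_le_def by blast
  have sub: "D \<union> {y. \<exists>x\<in>D. XE x y} \<subseteq> D \<union> (\<Union>x\<in>D. {y. XE x y} - {p x})"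
  proof
    fix y assume "y \<in> D \<union> {y. \<exists>x\<in>D. XE x y}"
    then consider "y \<in> D" | x where "x \<in> D" "XE x y" by blast
    then show "y \<in> D \<union> (\<Union>x\<in>D. {y. XE x y} - {p x})"
    proof cases
      case 2 then show ?thesis using p[OF 2(1)] by (cases "y = p x") auto
    qed simp
  qed
  have fin: "finite (D \<union> (\<Union>x\<in>D. {y. XE x y} - {p x}))" using D(1) fx by auto
  have cd: "\<And>x. x \<in> D \<Longrightarrow> card ({y. XE x y} - {p x}) \<le> \<Delta> - 1"
  proof -
    fix x assume x: "x \<in> D"
    have "card ({y. XE x y} - {p x}) = card {y. XE x y} - 1" using p[OF x] fx[OF x] by (simp add: card_Diff_singleton)
    then show "card ({y. XE x y} - {p x}) \<le> \<Delta> - 1" using fx[OF x] diff_le_mono by auto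
  qed
  have c1: "card (D \<union> {y. \<exists>x\<in>D. XE x y}) \<le> card (D \<union> (\<Union>x\<in>D. {y. XE x y} - {p x}))"
    using sub fin by (rule card_mono[rotated])
  have c2: "card (D \<union> (\<Union>x\<in>D. {y. XE x y} - {p x})) \<le> card D + card (\<Union>x\<in>D. {y. XE x y} - {p x})"
    by (rule card_Un_le)
  have c3: "card (\<Union>x\<in>D. {y. XE x y} - {p x}) \<le> (\<Sum>x\<in>D. card ({y. XE x y} - {p x}))"
    by (rule card_UN_le[OF D(1)])
  have c4: "(\<Sum>x\<in>D. card ({y. XE x y} - {p x})) \<le> (\<Sum>x\<in>D. \<Delta> - 1)" by (rule sum_mono) (rule cd)
  have c5: "(\<Sum>x\<in>D. \<Delta> - 1) = card D * (\<Delta> - 1)" by simp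
  have c6: "card D + card D * (\<Delta> - 1) = card D * \<Delta>" using D2 by (cases \<Delta>) (auto simp: algebra_simps)
  have "card (D \<union> {y. \<exists>x\<in>D. XE x y}) \<le> card D * \<Delta>" using c1 c2 c3 c4 c5 c6 by linarith
  then show ?thesis using sub fin finite_subset by blast
qed

lemma embed:
  assumes uw: "E u w" and n: "2 * (t + 1) * \<Delta> \<le> n"
  shows "\<exists>(V' :: nat set) E' col' h' u' w'. finite V' \<and> card V' = n \<and> is_tree V' E' \<and> max_deg_le V' E' \<Delta> \<and>
     proper_edge_col E' col' \<Delta> \<and> proper_H_labeling H R \<Delta> V' E' col' h' \<and> u' \<in> V' \<and> w' \<in> V' \<and>
     E' u' w' \<and> col' u' w' = col u w \<and>
     vexec A n E' col' h' t [u'] = vexec A n XE XC XH t [Inl u] \<and>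
     vexec A n E' col' h' t [w'] = vexec A n XE XC XH t [Inl w] \<and>
     card {y. E' u' y} = card {y. XE (Inl u) y} \<and> colors E' col' u' = colors XE XC (Inl u)"
proof -
  define Tu where "Tu = vtrace A n XE XC XH t [Inl u]"
  define Tw where "Tw = vtrace A n XE XC XH t [Inl w]"
  define D where "D = set Tu \<union> set Tw"
  have uV: "u \<in> V" "w \<in> V" using E_in[OF uw] by auto
  have uwX: "XE (Inl u) (Inl w)" using uw by simp
  have iu: "Inl u \<in> D" "Inl w \<in> D" unfolding D_def Tu_def Tw_def
    using vtrace_mono[of "[Inl u]" A n XE XC XH t] vtrace_mono[of "[Inl w]" A n XE XC XH t] by auto
  have DX: "D \<subseteq> XV"
  proof -
    have "\<forall>y\<in>set Tu. y \<in> XV" unfolding Tu_def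
    proof (rule vtrace_closed[OF xpc])
      show "\<forall>x\<in>set [Inl u]. x \<in> XV" using uV by (simp add: xV_def)
    qed (use xE_in in blast)
    moreover have "\<forall>y\<in>set Tw. y \<in> XV" unfolding Tw_def
    proof (rule vtrace_closed[OF xpc])
      show "\<forall>x\<in>set [Inl w]. x \<in> XV" using uV by (simp add: xV_def)
    qed (use xE_in in blast)
    ultimately show ?thesis unfolding D_def by blast
  qed
  have fD: "finite D" unfolding D_def by simp
  have cD: "card D \<le> 2 * (t + 1)"
  proof -
    have "length Tu \<le> 1 + t" "length Tw \<le> 1 + t"
      unfolding Tu_def Tw_def using vtrace_length[of A n XE XC XH t "[Inl u]"] vtrace_length[of A n XE XC XH t "[Inl w]"]
      by simp_all
    then have "card (set Tu) \<le> t + 1" "card (set Tw) \<le> t + 1"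
      using card_length[of Tu] card_length[of Tw] by linarith+
    then show ?thesis unfolding D_def using card_Un_le[of "set Tu" "set Tw"] by simp
  qed
  have nb: "\<forall>x\<in>D. \<exists>z\<in>D. XE x z"
  proof -
    have "\<forall>y\<in>set Tu. y \<in> D \<and> (\<exists>z\<in>D. XE y z)" unfolding Tu_def
    proof (rule vtrace_closed[OF xpc])
      show "\<forall>x\<in>set [Inl u]. x \<in> D \<and> (\<exists>z\<in>D. XE x z)" using iu uwX by (metis empty_iff list.set(1) set_ConsD)
    next
      fix x w' assume a: "x \<in> D \<and> (\<exists>z\<in>D. XE x z)" "XE x w'" "w' \<in> set (vtrace A n XE XC XH t [Inl u])"
      then show "w' \<in> D \<and> (\<exists>z\<in>D. XE w' z)" using xE_sym' unfolding D_def Tu_def by blast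
    qed
    moreover have "\<forall>y\<in>set Tw. y \<in> D \<and> (\<exists>z\<in>D. XE y z)" unfolding Tw_def
    proof (rule vtrace_closed[OF xpc])
      show "\<forall>x\<in>set [Inl w]. x \<in> D \<and> (\<exists>z\<in>D. XE x z)" using iu xE_sym'[OF uwX] by (metis empty_iff list.set(1) set_ConsD)
    next
      fix x w' assume a: "x \<in> D \<and> (\<exists>z\<in>D. XE x z)" "XE x w'" "w' \<in> set (vtrace A n XE XC XH t [Inl w])"
      then show "w' \<in> D \<and> (\<exists>z\<in>D. XE w' z)" using xE_sym' unfolding D_def Tw_def by blast
    qed
    ultimately show ?thesis unfolding D_def by blast
  qed
  have cn: "\<forall>y\<in>D. conn XE D (Inl u) y"
  proof -
    have "\<forall>y\<in>set Tu. conn XE D (Inl u) y" unfolding Tu_def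
    proof (rule vtrace_closed[OF xpc])
      show "\<forall>x\<in>set [Inl u]. conn XE D (Inl u) x" using conn_refl[where E=XE, OF iu(1)] by simp
    next
      fix x w' assume a: "conn XE D (Inl u) x" "XE x w'" "w' \<in> set (vtrace A n XE XC XH t [Inl u])"
      then have "w' \<in> D" unfolding D_def Tu_def by blast
      then show "conn XE D (Inl u) w'" using conn_step[OF a(1) a(2)] by blast
    qed
    moreover have "\<forall>y\<in>set Tw. conn XE D (Inl u) y" unfolding Tw_def
    proof (rule vtrace_closed[OF xpc])
      show "\<forall>x\<in>set [Inl w]. conn XE D (Inl u) x" using conn_step[OF conn_refl[where E=XE, OF iu(1)] uwX iu(2)] by simp
    next
      fix x w' assume a: "conn XE D (Inl u) x" "XE x w'" "w' \<in> set (vtrace A n XE XC XH t [Inl w])"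
      then have "w' \<in> D" unfolding D_def Tw_def by blast
      then show "conn XE D (Inl u) w'" using conn_step[OF a(1) a(2)] by blast
    qed
    ultimately show ?thesis unfolding D_def by blast
  qed
  define S0 where "S0 = D \<union> {y. \<exists>x\<in>D. XE x y}"
  have S0: "finite S0" "card S0 \<le> card D * \<Delta>" using card_S0[OF fD DX nb] unfolding S0_def by auto
  have S0X: "S0 \<subseteq> XV" unfolding S0_def using DX xE_in by blast
  have cS0: "card S0 \<le> n"
  proof -
    have "card D * \<Delta> \<le> 2 * (t + 1) * \<Delta>" using cD by (rule mult_right_mono) simp
    then show ?thesis using S0(2) n by linarith
  qed
  have cn0: "\<forall>y\<in>S0. conn XE S0 (Inl u) y"
  proof
    fix y assume "y \<in> S0"
    then consider "y \<in> D" | x where "x \<in> D" "XE x y" unfolding S0_def by blast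
    then show "conn XE S0 (Inl u) y"
    proof cases
      case 1
      have "D \<subseteq> S0" unfolding S0_def by blast
      then show ?thesis using cn 1 conn_mono[of XE D "Inl u" y S0] by blast
    next
      case 2
      have "D \<subseteq> S0" unfolding S0_def by blast
      then have "conn XE S0 (Inl u) x" using cn 2 conn_mono[of XE D "Inl u" x S0] by blast
      then show ?thesis using conn_step[of XE S0 "Inl u" x y] 2 \<open>y \<in> S0\<close> by blast
    qed
  qed
  have uS0: "Inl u \<in> S0" using iu unfolding S0_def by blast
  have ext: "\<And>S. finite S \<Longrightarrow> S \<subseteq> XV \<Longrightarrow> Inl u \<in> S \<Longrightarrow> \<exists>x\<in>S. \<exists>y. y \<notin> S \<and> XE x y \<and> y \<in> XV"
    using tree_ext[OF xtree XV_infinite[OF uV(1)]] by blast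
  obtain S where S: "S0 \<subseteq> S" "S \<subseteq> XV" "finite S" "card S = n" "\<forall>y\<in>S. conn XE S (Inl u) y"
    using grow[of XV "Inl u" XE, OF ext S0(1) S0X uS0 cn0, of "n - card S0" n] cS0 by auto
  obtain \<sigma> :: "'v + 'v \<times> nat \<Rightarrow> nat" and V' E' col' h' where
    I: "finite V'" "card V' = card S" "is_tree V' E'" "max_deg_le V' E' \<Delta>"
     "proper_edge_col E' col' \<Delta>" "proper_H_labeling H R \<Delta> V' E' col' h'" "\<forall>x\<in>S. \<sigma> x \<in> V'"
     "\<forall>x\<in>S. \<forall>y\<in>S. XE x y \<longrightarrow> E' (\<sigma> x) (\<sigma> y) \<and> col' (\<sigma> x) (\<sigma> y) = XC x y"
     "\<forall>x\<in>S. (\<forall>y. XE x y \<longrightarrow> y \<in> S) \<longrightarrow> obs E' col' h' (\<sigma> x) = obs XE XC XH x \<and>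
         (\<forall>c. nbr E' col' (\<sigma> x) c = map_option \<sigma> (nbr XE XC x c)) \<and> card {w. E' (\<sigma> x) w} = card {w. XE x w}"
    using induced_nat[OF xtree xdeg xpc xlab S(3) S(2) S(5)] by blast
  have loc: "\<And>x. x \<in> D \<Longrightarrow> obs E' col' h' (\<sigma> x) = obs XE XC XH x \<and>
         (\<forall>c. nbr E' col' (\<sigma> x) c = map_option \<sigma> (nbr XE XC x c)) \<and> card {w. E' (\<sigma> x) w} = card {w. XE x w}"
  proof -
    fix x assume x: "x \<in> D"
    have "x \<in> S" using x S(1) unfolding S0_def by blast
    moreover have "\<forall>y. XE x y \<longrightarrow> y \<in> S" using x S(1) unfolding S0_def by blast
    ultimately show "?thesis x" using I(9) by blast
  qed
  have ru: "vexec A n E' col' h' t (map \<sigma> [Inl u]) = vexec A n XE XC XH t [Inl u]"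
    by (rule vexec_transfer) (use loc in \<open>auto simp: D_def Tu_def\<close>)
  have rw: "vexec A n E' col' h' t (map \<sigma> [Inl w]) = vexec A n XE XC XH t [Inl w]"
    by (rule vexec_transfer) (use loc in \<open>auto simp: D_def Tw_def\<close>)
  have inS: "Inl u \<in> S" "Inl w \<in> S" using iu S(1) unfolding S0_def by auto
  have e: "E' (\<sigma> (Inl u)) (\<sigma> (Inl w)) \<and> col' (\<sigma> (Inl u)) (\<sigma> (Inl w)) = col u w"
    using I(8) inS uwX by fastforce
  have lu: "obs E' col' h' (\<sigma> (Inl u)) = obs XE XC XH (Inl u)" "card {y. E' (\<sigma> (Inl u)) y} = card {y. XE (Inl u) y}"
    using loc[OF iu(1)] by auto
  have cc: "colors E' col' (\<sigma> (Inl u)) = colors XE XC (Inl u)" using lu(1) by (metis snd_obs)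
  show ?thesis
    apply (rule exI[of _ V'], rule exI[of _ E'], rule exI[of _ col'], rule exI[of _ h'],
           rule exI[of _ "\<sigma> (Inl u)"], rule exI[of _ "\<sigma> (Inl w)"])
    using I(1-7) S(4) inS e ru rw lu(2) cc by auto
qed

end

lemma enc: "idg_encode R \<Delta> H = concat (map (\<lambda>i. concat (map (\<lambda>u. map (H i u) [0..<idg_size R \<Delta>]) [0..<idg_size R \<Delta>])) [1..<\<Delta>+1])"
  unfolding idg_encode_def by (simp del: upt_Suc add: map_concat)

lemma concat_eq_blocks:
  "(\<And>x. x \<in> set xs \<Longrightarrow> length (f x) = length (g x)) \<Longrightarrow> concat (map f xs) = concat (map g xs) \<Longrightarrow> \<forall>x\<in>set xs. f x = g x"
proof (induction xs)
  case (Cons a xs)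
  have "f a @ concat (map f xs) = g a @ concat (map g xs)" using Cons.prems(2) by simp
  moreover have "length (f a) = length (g a)" using Cons.prems(1) by simp
  ultimately have fa: "f a = g a" and r: "concat (map f xs) = concat (map g xs)"
    using append_eq_append_conv by blast+
  have "\<forall>x\<in>set xs. f x = g x" using Cons.IH[OF _ r] Cons.prems(1) by simp
  then show ?case using fa by simp
qed simp

lemma encode_inj:
  assumes "is_ID_graph R \<Delta> H" "is_ID_graph R \<Delta> H'" "idg_encode R \<Delta> H = idg_encode R \<Delta> H'"
  shows "H = H'"
proof (intro ext)
  fix i u v
  let ?N = "idg_size R \<Delta>"
  show "H i u v = H' i u v"
  proof (cases "i \<in> {1..\<Delta>} \<and> u < ?N \<and> v < ?N")
    case True
    have "\<forall>i\<in>set [1..<\<Delta>+1]. concat (map (\<lambda>u. map (H i u) [0..<?N]) [0..<?N]) = concat (map (\<lambda>u. map (H' i u) [0..<?N]) [0..<?N])"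
      by (rule concat_eq_blocks) (use assms(3) in \<open>simp_all add: enc length_concat o_def del: upt_Suc\<close>)
    moreover have "i \<in> set [1..<\<Delta>+1]" using True by (simp del: upt_Suc)
    ultimately have "concat (map (\<lambda>u. map (H i u) [0..<?N]) [0..<?N]) = concat (map (\<lambda>u. map (H' i u) [0..<?N]) [0..<?N])"
      by blast
    then have "\<forall>u\<in>set [0..<?N]. map (H i u) [0..<?N] = map (H' i u) [0..<?N]"
      by (rule concat_eq_blocks[rotated]) simp
    then have "map (H i u) [0..<?N] = map (H' i u) [0..<?N]" using True by auto
    then show ?thesis using True by simp
  next
    case False
    then have "\<not> H i u v" "\<not> H' i u v" using ID_support[OF assms(1)] ID_support[OF assms(2)] by blast+
    then show ?thesis by simp
  qed
qed

lemma finite_min_lex: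
  fixes F :: "bool list set"
  shows "finite F \<Longrightarrow> F \<noteq> {} \<Longrightarrow> \<exists>m\<in>F. \<forall>x\<in>F. lexordp_eq m x"
proof (induction F rule: finite_ne_induct)
  case (singleton x) then show ?case by (auto simp: lexordp_eq_refl)
next
  case (insert x F)
  then obtain m where m: "m \<in> F" "\<forall>y\<in>F. lexordp_eq m y" by blast
  show ?case
  proof (cases "lexordp_eq x m")
    case True
    then have "\<forall>y\<in>insert x F. lexordp_eq x y" using m lexordp_eq_trans lexordp_eq_refl by blast
    then show ?thesis by blast
  next
    case False then have "lexordp_eq m x" using lexordp_eq_linear by blast
    then show ?thesis using m by blast
  qed
qed

lemma Hid_is_ID:
  assumes ex: "\<exists>H. is_ID_graph R \<Delta> H"
  shows "is_ID_graph R \<Delta> (Hid R \<Delta>)"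
proof -
  define F where "F = idg_encode R \<Delta> ` {H. is_ID_graph R \<Delta> H}"
  define L where "L = length (idg_encode R \<Delta> (\<lambda>_ _ _. False))"
  have len: "\<And>H. length (idg_encode R \<Delta> H) = L" unfolding L_def by (simp add: enc length_concat o_def del: upt_Suc)
  have "F \<subseteq> {xs. set xs \<subseteq> (UNIV :: bool set) \<and> length xs = L}" unfolding F_def using len by auto
  then have fin: "finite F" using finite_lists_length_eq[of "UNIV :: bool set" L] finite_subset by auto
  have ne: "F \<noteq> {}" unfolding F_def using ex by auto
  obtain m where m: "m \<in> F" "\<forall>x\<in>F. lexordp_eq m x" using finite_min_lex[OF fin ne] by blast
  obtain H0 where H0: "is_ID_graph R \<Delta> H0" "idg_encode R \<Delta> H0 = m" using m(1) unfolding F_def by blast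
  have P0: "is_ID_graph R \<Delta> H0 \<and> (\<forall>H'. is_ID_graph R \<Delta> H' \<longrightarrow> lexordp_eq (idg_encode R \<Delta> H0) (idg_encode R \<Delta> H'))"
    using H0 m(2) unfolding F_def by blast
  have "Hid R \<Delta> = H0"
    unfolding Hid_def
  proof (rule the_equality)
    show "is_ID_graph R \<Delta> H0 \<and> (\<forall>H'. is_ID_graph R \<Delta> H' \<longrightarrow> lexordp_eq (idg_encode R \<Delta> H0) (idg_encode R \<Delta> H'))"
      by (rule P0)
  next
    fix H1 assume P1: "is_ID_graph R \<Delta> H1 \<and> (\<forall>H'. is_ID_graph R \<Delta> H' \<longrightarrow> lexordp_eq (idg_encode R \<Delta> H1) (idg_encode R \<Delta> H'))"
    then have "idg_encode R \<Delta> H1 = idg_encode R \<Delta> H0" using P0 lexordp_eq_antisym by blast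
    then show "H1 = H0" using encode_inj P1 H0(1) by blast
  qed
  then show ?thesis using H0 by simp
qed

context xt
begin

lemma L_edge:
  assumes uw: "E u w" and n: "2 * (f n + 1) * \<Delta> \<le> n" and sol: "volume_solves_SO A f d \<Delta>"
    and HR: "H = Hid n \<Delta>" "R = n"
  shows "\<exists>S1 S2. lexec A n H (view E col h (f n) u) (f n) [Real []] = Some S1 \<and>
     lexec A n H (view E col h (f n) w) (f n) [Real []] = Some S2 \<and>
     (col u w \<in> S1 \<longleftrightarrow> col u w \<notin> S2) \<and> S1 \<subseteq> colors XE XC (Inl u) \<and>
     (d \<le> card {y. XE (Inl u) y} \<longrightarrow> S1 \<noteq> {})"
proof -
  obtain V' :: "nat set" and E' col' h' u' w' where
    T: "finite V'" "card V' = n" "is_tree V' E'" "max_deg_le V' E' \<Delta>"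
     "proper_edge_col E' col' \<Delta>" "proper_H_labeling H R \<Delta> V' E' col' h'" "u' \<in> V'" "w' \<in> V'"
     "E' u' w'" "col' u' w' = col u w"
     "vexec A n E' col' h' (f n) [u'] = vexec A n XE XC XH (f n) [Inl u]"
     "vexec A n E' col' h' (f n) [w'] = vexec A n XE XC XH (f n) [Inl w]"
     "card {y. E' u' y} = card {y. XE (Inl u) y}" "colors E' col' u' = colors XE XC (Inl u)"
    using embed[OF uw n, of A] by blast
  define S' where "S' = (\<lambda>v. the (vexec A n E' col' h' (f n) [v]))"
  have so: "(\<forall>v\<in>V'. vexec A n E' col' h' (f n) [v] \<noteq> None) \<and> sinkless_orientation d V' E' col' S'"
    using sol T(1-6) unfolding volume_solves_SO_def S'_def HR by blast
  have uV: "u \<in> V" "w \<in> V" using E_in[OF uw] by auto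
  have simu: "lexec A n H (view E col h (f n) u) (f n) [Real []] = vexec A n XE XC XH (f n) [Inl u]"
    using SIM[OF uV(1), of "[Real []]" "f n" "f n" A n] by simp
  have simw: "lexec A n H (view E col h (f n) w) (f n) [Real []] = vexec A n XE XC XH (f n) [Inl w]"
    using SIM[OF uV(2), of "[Real []]" "f n" "f n" A n] by simp
  have su: "lexec A n H (view E col h (f n) u) (f n) [Real []] = Some (S' u')"
  proof -
    have "vexec A n E' col' h' (f n) [u'] \<noteq> None" using so T(7) by blast
    then show ?thesis using simu T(11) unfolding S'_def by auto
  qed
  have sw: "lexec A n H (view E col h (f n) w) (f n) [Real []] = Some (S' w')"
  proof -
    have "vexec A n E' col' h' (f n) [w'] \<noteq> None" using so T(8) by blast
    then show ?thesis using simw T(12) unfolding S'_def by auto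
  qed
  have cons: "col u w \<in> S' u' \<longleftrightarrow> col u w \<notin> S' w'" using so T(9,10) unfolding sinkless_orientation_def by metis
  have sub: "S' u' \<subseteq> colors XE XC (Inl u)" using so T(7,14) unfolding sinkless_orientation_def by metis
  have ne: "d \<le> card {y. XE (Inl u) y} \<longrightarrow> S' u' \<noteq> {}" using so T(7,13) unfolding sinkless_orientation_def by metis
  show ?thesis using su sw cons sub ne by blast
qed

end

lemma nb_seq_false:
  assumes tree: "is_tree V E" and fin: "finite V" and inv: "\<And>i. x i \<in> V \<and> E (x i) (x (Suc i))"
    and nb: "\<And>i. x (Suc (Suc i)) \<noteq> x i"
  shows False
proof -
  have irr: "\<And>a. \<not> E a a" using tree_irr[OF tree] by blast
  have "\<not> inj_on x {0..card V}"
  proof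
    assume "inj_on x {0..card V}"
    moreover have "x ` {0..card V} \<subseteq> V" using inv by auto
    ultimately have "card {0..card V} \<le> card V" using card_inj_on_le fin by blast
    then show False by simp
  qed
  then obtain a b where ab: "a \<noteq> b" "x a = x b" unfolding inj_on_def by blast
  have "\<exists>j. \<exists>i<j. x i = x j"
  proof (cases "a < b")
    case True then show ?thesis using ab by blast
  next
    case False then have "b < a" using ab(1) by linarith
    then show ?thesis using ab by metis
  qed
  define J where "J = (LEAST j. \<exists>i<j. x i = x j)"
  have J: "\<exists>i<J. x i = x J" unfolding J_def by (rule LeastI_ex) fact
  have minJ: "\<And>a b. a < b \<Longrightarrow> b < J \<Longrightarrow> x a \<noteq> x b"
  proof -
    fix a b assume ab: "a < b" "b < J"
    show "x a \<noteq> x b"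
    proof
      assume "x a = x b"
      then have "\<exists>i<b. x i = x b" using ab by blast
      then have "J \<le> b" unfolding J_def by (rule Least_le)
      then show False using ab by simp
    qed
  qed
  obtain i where i: "i < J" "x i = x J" using J by blast
  define zs where "zs = map x [i..<J]"
  have len: "length zs = J - i" unfolding zs_def by simp
  have l3: "3 \<le> length zs"
  proof -
    have "J \<noteq> Suc i" using i inv[of i] irr by metis
    moreover have "J \<noteq> Suc (Suc i)" using i nb[of i] by metis
    ultimately show ?thesis using len i by linarith
  qed
  have "inj_on x {i..<J}"
    unfolding inj_on_def
  proof (intro ballI impI)
    fix a b assume ab: "a \<in> {i..<J}" "b \<in> {i..<J}" "x a = x b"
    show "a = b"
    proof (rule ccontr)
      assume "a \<noteq> b"
      then have "a < b \<or> b < a" by linarith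
      then show False using minJ ab by (metis atLeastLessThan_iff)
    qed
  qed
  then have d: "distinct zs" unfolding zs_def by (simp add: distinct_map)
  have w: "walk_path E zs" unfolding walk_path_def
  proof (intro allI impI)
    fix j assume "Suc j < length zs"
    then have "zs ! j = x (i + j)" "zs ! Suc j = x (Suc (i + j))" unfolding zs_def by simp_all
    then show "E (zs ! j) (zs ! Suc j)" using inv[of "i + j"] by simp
  qed
  have "last zs = x (J - 1)" "hd zs = x i" unfolding zs_def using i
    by (auto simp: last_map hd_map)
  moreover have "E (x (J - 1)) (x J)" using inv[of "J - 1"] i by simp
  ultimately have "E (last zs) (hd zs)" using i by simp
  then show False using tree_acyc[OF tree l3 d w] by blast
qed

lemma d1_false:
  assumes tree: "is_tree V E" and fin: "finite V" and two: "a \<in> V" "b \<in> V" "a \<noteq> b"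
    and pc: "proper_edge_col E col \<Delta>" and so: "sinkless_orientation 1 V E col S"
  shows False
proof -
  have hasn: "\<exists>y. E v y" if v: "v \<in> V" for v
  proof -
    obtain o' where o: "o' \<in> V" "o' \<noteq> v" using two by metis
    obtain xs where xs: "xs \<noteq> []" "hd xs = v" "last xs = o'" "walk_path E xs"
      using tree_conn[OF tree v o(1)] by blast
    then obtain ys where ys: "xs = v # ys" by (cases xs) auto
    then have "ys \<noteq> []" using xs o by auto
    then obtain y zs where "ys = y # zs" by (cases ys) auto
    then show ?thesis using xs(4) ys by auto
  qed
  have out: "\<exists>y. E v y \<and> col v y \<in> S v" if v: "v \<in> V" for v
  proof -
    obtain y where y: "E v y" using hasn[OF v] by blast
    have "{w. E v w} \<subseteq> V" using tree_in[OF tree] by blast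
    then have "finite {w. E v w}" using fin finite_subset by blast
    then have "1 \<le> card {w. E v w}" using y by (metis (mono_tags, lifting) One_nat_def Suc_leI card_gt_0_iff empty_iff mem_Collect_eq)
    then have "S v \<noteq> {}" using so v unfolding sinkless_orientation_def by blast
    then obtain c where c: "c \<in> S v" by blast
    then have "c \<in> colors E col v" using so v unfolding sinkless_orientation_def by blast
    then show ?thesis using c unfolding colors_def by blast
  qed
  define sc where "sc = (\<lambda>v. SOME y. E v y \<and> col v y \<in> S v)"
  have sc: "\<And>v. v \<in> V \<Longrightarrow> E v (sc v) \<and> col v (sc v) \<in> S v"
    unfolding sc_def using out by (metis (mono_tags, lifting) someI_ex)
  define x where "x = (\<lambda>i. (sc ^^ i) a)"
  have xs: "x (Suc i) = sc (x i)" for i unfolding x_def by simp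
  have inv: "x i \<in> V \<and> E (x i) (x (Suc i)) \<and> col (x i) (x (Suc i)) \<in> S (x i)" for i
  proof (induction i)
    case 0 then show ?case using sc[OF two(1)] tree_in[OF tree] unfolding x_def by auto
  next
    case (Suc i)
    then have "x (Suc i) \<in> V" using tree_in[OF tree] by blast
    then show ?case using sc xs by auto
  qed
  have nb: "x (Suc (Suc i)) \<noteq> x i" for i
  proof
    assume eq: "x (Suc (Suc i)) = x i"
    have a1: "col (x i) (x (Suc i)) \<in> S (x i)" "E (x i) (x (Suc i))" using inv[of i] by auto
    have a2: "col (x (Suc i)) (x i) \<in> S (x (Suc i))" using inv[of "Suc i"] eq by simp
    have "col (x i) (x (Suc i)) = col (x (Suc i)) (x i)" using pc a1(2) unfolding proper_edge_col_def by blast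
    then show False using so a1 a2 unfolding sinkless_orientation_def by metis
  qed
  show False using nb_seq_false[OF tree fin, of x] inv nb by blast
qed

lemma tree1: "is_tree {a} (\<lambda>_ _. False)"
  unfolding is_tree_def
proof (intro conjI)
  show "\<forall>u\<in>{a}. \<forall>w\<in>{a}. \<exists>xs. xs \<noteq> [] \<and> hd xs = u \<and> last xs = w \<and> walk_path (\<lambda>_ _. False) xs"
    by (intro ballI exI[of _ "[a]"]) auto
  show "\<nexists>xs. 3 \<le> length xs \<and> distinct xs \<and> walk_path (\<lambda>_ _. False) xs \<and> False" by blast
qed auto

definition E2 :: "nat \<Rightarrow> nat \<Rightarrow> bool" where "E2 a b \<longleftrightarrow> a < 2 \<and> b < 2 \<and> a \<noteq> b"

lemma tree2: "is_tree {0::nat, 1} E2"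
  unfolding is_tree_def
proof (intro conjI)
  show "\<forall>u\<in>{0::nat, 1}. \<forall>w\<in>{0, 1}. \<exists>xs. xs \<noteq> [] \<and> hd xs = u \<and> last xs = w \<and> walk_path E2 xs"
  proof (intro ballI)
    fix u w :: nat assume uw: "u \<in> {0, 1}" "w \<in> {0, 1}"
    show "\<exists>xs. xs \<noteq> [] \<and> hd xs = u \<and> last xs = w \<and> walk_path E2 xs"
    proof (cases "u = w")
      case True then show ?thesis by (intro exI[of _ "[u]"]) auto
    next
      case False then show ?thesis using uw by (intro exI[of _ "[u, w]"]) (auto simp: E2_def)
    qed
  qed
  show "\<nexists>xs. 3 \<le> length xs \<and> distinct xs \<and> walk_path E2 xs \<and> E2 (last xs) (hd xs)"
  proof
    assume "\<exists>xs. 3 \<le> length xs \<and> distinct xs \<and> walk_path E2 xs \<and> E2 (last xs) (hd xs)"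
    then obtain xs where xs: "3 \<le> length xs" "distinct xs" "walk_path E2 xs" "E2 (last xs) (hd xs)" by blast
    have "set xs \<subseteq> {0..<2}"
      by (rule walk_path_set[OF xs(3)]) (use xs in \<open>auto simp: E2_def\<close>)
    then have "card (set xs) \<le> 2" using card_mono[of "{0..<2::nat}" "set xs"] by simp
    then show False using xs(1,2) distinct_card by fastforce
  qed
qed (auto simp: E2_def)

definition Lalg :: "volume_alg \<Rightarrow> nat \<Rightarrow> (nat \<Rightarrow> nat \<Rightarrow> nat \<Rightarrow> bool) \<Rightarrow> nat \<Rightarrow> local_alg" where
  "Lalg A n H t vw = (case lexec A n H vw t [Real []] of Some S \<Rightarrow> S \<inter> snd (the (vw [])) | None \<Rightarrow> {})"

lemma view_nil: "view E col h t v [] = Some (obs E col h v)" unfolding view_def by simp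

lemma main_case:
  fixes V :: "'w set"
  assumes D2: "2 \<le> \<Delta>" and d2: "2 \<le> d" and ID: "is_ID_graph n \<Delta> (Hid n \<Delta>)"
    and n: "2 * (f n + 1) * \<Delta> \<le> n" and sol: "volume_solves_SO A f d \<Delta>"
    and T: "is_tree V E" "max_deg_le V E \<Delta>" "proper_edge_col E col \<Delta>" "proper_H_labeling (Hid n \<Delta>) n \<Delta> V E col h"
  shows "sinkless_orientation d V E col (\<lambda>v. Lalg A n (Hid n \<Delta>) (f n) (view E col h (f n) v))"
proof -
  interpret xt V E col h "Hid n \<Delta>" n \<Delta> using T ID D2 by unfold_locales
  let ?L = "\<lambda>v. Lalg A n (Hid n \<Delta>) (f n) (view E col h (f n) v)"
  have Lv: "\<And>v S. lexec A n (Hid n \<Delta>) (view E col h (f n) v) (f n) [Real []] = Some S \<Longrightarrow> ?L v = S \<inter> colors E col v"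
    unfolding Lalg_def by (simp add: view_nil)
  have p1: "\<forall>v\<in>V. ?L v \<subseteq> colors E col v"
    unfolding Lalg_def by (auto simp: view_nil split: option.splits)
  have p2: "\<forall>u w. E u w \<longrightarrow> (col u w \<in> ?L u \<longleftrightarrow> col u w \<notin> ?L w)"
  proof (intro allI impI)
    fix u w assume uw: "E u w"
    obtain S1 S2 where S: "lexec A n (Hid n \<Delta>) (view E col h (f n) u) (f n) [Real []] = Some S1"
      "lexec A n (Hid n \<Delta>) (view E col h (f n) w) (f n) [Real []] = Some S2" "col u w \<in> S1 \<longleftrightarrow> col u w \<notin> S2"
      using L_edge[OF uw n sol refl refl] by blast
    have c: "col u w \<in> colors E col u" "col u w \<in> colors E col w"
      using in_colors[OF uw] in_colors[OF E_sym[OF uw]] col_sym[OF uw] by auto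
    show "col u w \<in> ?L u \<longleftrightarrow> col u w \<notin> ?L w" using Lv[OF S(1)] Lv[OF S(2)] S(3) c by auto
  qed
  have p3: "\<forall>u\<in>V. d \<le> card {w. E u w} \<longrightarrow> ?L u \<noteq> {}"
  proof (intro ballI impI)
    fix u assume u: "u \<in> V" and dc: "d \<le> card {w. E u w}"
    then have "{w. E u w} \<noteq> {}" using d2 by (metis card.empty le_zero_eq not_numeral_le_zero)
    then obtain w where uw: "E u w" by blast
    obtain S1 where S: "lexec A n (Hid n \<Delta>) (view E col h (f n) u) (f n) [Real []] = Some S1"
      "S1 \<subseteq> colors XE XC (Inl u)" "d \<le> card {y. XE (Inl u) y} \<longrightarrow> S1 \<noteq> {}"
      using L_edge[OF uw n sol refl refl] by blast
    have nl: "\<not> leafy E col u" unfolding leafy_def using card_colors[OF deg u pc] dc d2 by simp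
    have cc: "colors XE XC (Inl u) = colors E col u" using colors_xInl[of u] nl by simp
    have "{y. XE (Inl u) y} = Inl ` {w. E u w}" using xE_Inl_set[of u] nl by simp
    then have "card {y. XE (Inl u) y} = card {w. E u w}" by (simp add: card_image)
    then have "S1 \<noteq> {}" using S(3) dc by simp
    then show "?L u \<noteq> {}" using Lv[OF S(1)] S(2) cc by auto
  qed
  show ?thesis unfolding sinkless_orientation_def using p1 p2 p3 by blast
qed

theorem lemma8:
  fixes \<Delta> d :: nat and A :: volume_alg and f :: "nat \<Rightarrow> nat"
  assumes H_exists: "\<exists>R0. \<forall>R\<ge>R0. \<exists>H. is_ID_graph R \<Delta> H"
    and solves: "volume_solves_SO A f d \<Delta>"
    and small: "\<exists>N0. \<forall>n\<ge>N0. real (f n) \<le> real n / (3 * real \<Delta>)"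
  shows "\<exists>nstar t (L :: local_alg). t < nstar \<and>
           (\<forall>(V :: 'w set) E col h.
              is_tree V E \<and> max_deg_le V E \<Delta> \<and> proper_edge_col E col \<Delta> \<and>
              proper_H_labeling (Hid nstar \<Delta>) nstar \<Delta> V E col h \<longrightarrow>
              sinkless_orientation d V E col (\<lambda>v. L (view E col h t v)))"
proof -
  obtain R0 where R0: "\<forall>R\<ge>R0. \<exists>H. is_ID_graph R \<Delta> H" using H_exists by blast
  consider (z) "\<Delta> = 0" | (o) "\<Delta> = 1" | (g) "2 \<le> \<Delta>" by linarith
  then show ?thesis
  proof cases
    case z
    have "\<forall>(V :: 'w set) E col h.
              is_tree V E \<and> max_deg_le V E \<Delta> \<and> proper_edge_col E col \<Delta> \<and>
              proper_H_labeling (Hid 1 \<Delta>) 1 \<Delta> V E col h \<longrightarrow>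
              sinkless_orientation d V E col (\<lambda>v. (\<lambda>_. {}) (view E col h 0 v))"
    proof (intro allI impI)
      fix V :: "'w set" and E col h
      assume a: "is_tree V E \<and> max_deg_le V E \<Delta> \<and> proper_edge_col E col \<Delta> \<and> proper_H_labeling (Hid 1 \<Delta>) 1 \<Delta> V E col h"
      have "V = {}" using a z unfolding proper_H_labeling_def idg_size_def by auto
      then show "sinkless_orientation d V E col (\<lambda>v. (\<lambda>_. {}) (view E col h 0 v))"
        using a tree_in unfolding sinkless_orientation_def by fastforce
    qed
    then show ?thesis by (intro exI[of _ 1] exI[of _ 0] exI[of _ "\<lambda>_. {}"]) simp
  next
    case o
    have "max R0 1 \<ge> R0" by simp
    then obtain H where H: "is_ID_graph (max R0 1) \<Delta> H" using R0 by blast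
    have N: "idg_size (max R0 1) \<Delta> = 1" using o unfolding idg_size_def by simp
    have "1 \<le> card {u. H 1 0 u}" using ID_parts(4)[OF H] o N by auto
    then obtain u where u: "H 1 0 u" by (metis Collect_empty_eq card.empty not_one_le_zero)
    then have "u = 0" using ID_support[OF H u] N by simp
    then show ?thesis using u ID_irrefl[OF H] by blast
  next
    case g
    obtain N0 where N0: "\<forall>n\<ge>N0. real (f n) \<le> real n / (3 * real \<Delta>)" using small by blast
    consider (d0) "d = 0" | (d1) "d = 1" | (d2) "2 \<le> d" by linarith
    then show ?thesis
    proof cases
      case d0
      have t: "is_tree {0::nat} (\<lambda>_ _. False)" by (rule tree1)
      have md: "max_deg_le {0::nat} (\<lambda>_ _. False) \<Delta>" unfolding max_deg_le_def by simp
      have pc: "proper_edge_col (\<lambda>_ _::nat. False) (\<lambda>_ _. 1) \<Delta>" unfolding proper_edge_col_def by simp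
      have lb: "proper_H_labeling (Hid 1 \<Delta>) 1 \<Delta> {0::nat} (\<lambda>_ _. False) (\<lambda>_ _. 1) (\<lambda>_. 0)"
        unfolding proper_H_labeling_def idg_size_def using g by simp
      have "sinkless_orientation d {0::nat} (\<lambda>_ _. False) (\<lambda>_ _. 1)
              (\<lambda>v. the (vexec A 1 (\<lambda>_ _. False) (\<lambda>_ _. 1) (\<lambda>_. 0) (f 1) [v]))"
      proof -
        have pre: "finite {0::nat} \<and> card {0::nat} = 1 \<and> is_tree {0::nat} (\<lambda>_ _. False) \<and>
            max_deg_le {0::nat} (\<lambda>_ _. False) \<Delta> \<and> proper_edge_col (\<lambda>_ _::nat. False) (\<lambda>_ _. 1) \<Delta> \<and>
            proper_H_labeling (Hid 1 \<Delta>) 1 \<Delta> {0::nat} (\<lambda>_ _. False) (\<lambda>_ _. 1) (\<lambda>_. 0)"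
          using t md pc lb by simp
        have s: "\<forall>n (V :: nat set) E col h.
          finite V \<and> card V = n \<and> is_tree V E \<and> max_deg_le V E \<Delta> \<and> proper_edge_col E col \<Delta> \<and>
          proper_H_labeling (Hid n \<Delta>) n \<Delta> V E col h \<longrightarrow>
          (\<forall>v\<in>V. vexec A n E col h (f n) [v] \<noteq> None) \<and>
          sinkless_orientation d V E col (\<lambda>v. the (vexec A n E col h (f n) [v]))"
          using solves unfolding volume_solves_SO_def by blast
        note s1 = spec[OF spec[OF spec[OF spec[OF spec[OF s, of 1], of "{0::nat}"], of "\<lambda>_ _. False"], of "\<lambda>_ _. 1"], of "\<lambda>_. 0"]
        show ?thesis using mp[OF s1 pre] by blast
      qed
      then show ?thesis using d0 unfolding sinkless_orientation_def colors_def by auto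
    next
      case d1
      define n where "n = max R0 (2 * \<Delta>)"
      define H where "H = Hid n \<Delta>"
      have ID: "is_ID_graph n \<Delta> H" unfolding H_def using Hid_is_ID R0 unfolding n_def by simp
      have Npos: "0 < idg_size n \<Delta>" unfolding idg_size_def using g by simp
      define h0 :: "nat \<Rightarrow> nat" where "h0 = (\<lambda>a. if a = 0 then 0 else pick H 1 0)"
      have pk: "H 1 0 (pick H 1 0) \<and> pick H 1 0 < idg_size n \<Delta>" using pick_ok[OF ID _ Npos] g by simp
      have x: "xt {0::nat, 1} E2 (\<lambda>_ _. 1) h0 H n \<Delta>"
      proof
        show "is_tree {0::nat, 1} E2" by (rule tree2)
        show "max_deg_le {0::nat, 1} E2 \<Delta>" unfolding max_deg_le_def
        proof
          fix a :: nat assume "a \<in> {0, 1}"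
          have "{w. E2 a w} \<subseteq> {0, 1}" unfolding E2_def by auto
          then have "finite {w. E2 a w}" "card {w. E2 a w} \<le> 2"
            using card_mono[of "{0::nat, 1}" "{w. E2 a w}"] finite_subset by auto
          then show "finite {w. E2 a w} \<and> card {w. E2 a w} \<le> \<Delta>" using g by simp
        qed
        show "proper_edge_col E2 (\<lambda>_ _. 1) \<Delta>" unfolding proper_edge_col_def E2_def using g by auto
        show "proper_H_labeling H n \<Delta> {0, 1} E2 (\<lambda>_ _. 1) h0" unfolding proper_H_labeling_def
          using Npos pk ID_sym[OF ID] unfolding h0_def E2_def by auto
        show "is_ID_graph n \<Delta> H" by (rule ID)
        show "2 \<le> \<Delta>" by (rule g)
      qed
      have e: "E2 0 1" unfolding E2_def by simp
      have nb: "2 * (0 + 1) * \<Delta> \<le> n" unfolding n_def by simp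
      obtain V' :: "nat set" and E' col' h' u' w' where
        T: "finite V'" "card V' = n" "is_tree V' E'" "max_deg_le V' E' \<Delta>"
         "proper_edge_col E' col' \<Delta>" "proper_H_labeling H n \<Delta> V' E' col' h'" "u' \<in> V'" "w' \<in> V'" "E' u' w'"
        using xt.embed[OF x e nb, of A] by blast
      have "sinkless_orientation d V' E' col' (\<lambda>v. the (vexec A n E' col' h' (f n) [v]))"
        using solves T(1-6) unfolding volume_solves_SO_def H_def by blast
      moreover have "u' \<noteq> w'" using T(3,9) tree_irr by metis
      ultimately show ?thesis using d1_false[OF T(3) T(1) T(7) T(8) _ T(5)] d1 by blast
    next
      case d2
      define n where "n = max (max R0 N0) (6 * \<Delta>)"
      have ID: "is_ID_graph n \<Delta> (Hid n \<Delta>)" using Hid_is_ID R0 unfolding n_def by simp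
      have "real (f n) \<le> real n / (3 * real \<Delta>)" using N0 unfolding n_def by simp
      then have "real (f n) * (3 * real \<Delta>) \<le> real n" using g by (simp add: pos_le_divide_eq)
      then have "real (3 * \<Delta> * f n) \<le> real n" by (simp add: algebra_simps)
      then have fn: "3 * \<Delta> * f n \<le> n" by (simp only: of_nat_le_iff)
      have n6: "6 * \<Delta> \<le> n" unfolding n_def by simp
      have nb: "2 * (f n + 1) * \<Delta> \<le> n"
      proof -
        have "2 * (f n + 1) * \<Delta> = 2 * (\<Delta> * f n) + 2 * \<Delta>" by (simp add: algebra_simps)
        moreover have "3 * (\<Delta> * f n) \<le> n" using fn by (simp add: algebra_simps)
        ultimately show ?thesis using n6 by linarith
      qed
      have tn: "f n < n"
      proof -
        have "6 * f n \<le> 3 * \<Delta> * f n" using g by simp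
        then show ?thesis using fn n6 g by linarith
      qed
      have "\<forall>(V :: 'w set) E col h.
              is_tree V E \<and> max_deg_le V E \<Delta> \<and> proper_edge_col E col \<Delta> \<and>
              proper_H_labeling (Hid n \<Delta>) n \<Delta> V E col h \<longrightarrow>
              sinkless_orientation d V E col (\<lambda>v. Lalg A n (Hid n \<Delta>) (f n) (view E col h (f n) v))"
        using main_case[OF g d2 ID nb solves] by blast
      then show ?thesis using tn by blast
    qed
  qed
qed


end
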